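(* Let $(R,\mathfrak m)$ be a noetherian local ring, $\nu$ a valuation centered on $R$, $\nu=\nu_1\circ\nu_2$ a decomposition, and $\mathfrak p=\mathfrak C_{\nu_1}(R)$ (so $\nu_2$ is centered on $R/\mathfrak p$). For each local blowing up $R/\mathfrak p\to\overline R^{(1)}$ with respect to $\nu_2$, there exists a local blowing up $R\to R^{(1)}$ with respect to $\nu$ such that $R^{(1)}/\mathfrak p^{(1)}\simeq\overline R^{(1)}$ and $R_{\mathfrak p}\simeq R^{(1)}_{\mathfrak p^{(1)}}$, where $\mathfrak p^{(1)}=\mathfrak C_{\nu_1}(R^{(1)})$.
   Context: All rings are commutative noetherian with $1$. A valuation on a ring $R$ is a map $\nu:R\to\Gamma\cup\{\infty\}$ ($\Gamma$ an ordered abelian group) with $\nu(ab)=\nu(a)+\nu(b)$, $\nu(a+b)\ge\min\{\nu(a),\nu(b)\}$, $\nu(1)=0$, $\nu(0)=\infty$, whose support $\mathrm{supp}(\nu)=\{a:\nu(a)=\infty\}$ is a minimal prime ideal; it extends to localizations at multiplicative sets disjoint from the support via $\nu(a/s)=\nu(a)-\nu(s)$ and restricts to subrings, implicitly. $\nu$ has a center on $R$ if $\nu\ge0$ on $R$; its center is $\mathfrak C_\nu(R)=\{a:\nu(a)>0\}$. $\nu$ is centered on a local ring $(R,\mathfrak m)$ if $\nu\ge0$ on $R$ and $\nu>0$ on $\mathfrak m$. $\nu R$ denotes the subgroup of $\Gamma$ generated by the finite values of $\nu$. Local blowing up: for $b\in R\setminus\mathrm{supp}(\nu)$ let $J(b)=\bigcup_{i\ge1}\mathrm{ann}_R(b^i)$,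 so $R/J(b)\subseteq R_b$. Given $a_1,\ldots,a_r\in R$ with $\nu(a_i)\ge\nu(b)$, let $R'=(R/J(b))[a_1/b,\ldots,a_r/b]\subseteq R_b$ and $R^{(1)}=R'_{\mathfrak C_\nu(R')}$; the canonical map $R\to R^{(1)}$ is the local blowing up of $R$ with respect to $\nu$ along $(b,a_1,\ldots,a_r)$. Decomposition: let $\Delta$ be a convex subgroup of $\nu R$. Define $\nu_1(a)=\nu(a)+\Delta\in\nu R/\Delta$ (and $\infty$ if $\nu(a)=\infty$); $\nu_1$ is a valuation with a center on $R$, and $\mathfrak p=\mathfrak C_{\nu_1}(R)=\{a:\nu(a)>\delta\ \forall\delta\in\Delta\}$. Define $\nu_2$ on $R/\mathfrak p$ by $\nu_2(a+\mathfrak p)=\nu(a)$ for $a\notin\mathfrak p$, $\infty$ for $a\in\mathfrak p$. We write $\nu=\nu_1\circ\nu_2$. On a local blowing up $R^{(1)}$ of $R$ with respect to $\nu$, $\nu_1$ is defined by the same formula from the extension of $\nu$. *)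

theory Defs
  imports "HOL-Algebra.Algebra"
begin

section \<open>Extended values: \<Gamma> \<union> {\<infinity>}, with None playing the role of \<infinity>\<close>

fun vadd :: "'g::linordered_ab_group_add option \<Rightarrow> 'g option \<Rightarrow> 'g option" where
  "vadd (Some x) (Some y) = Some (x + y)"
| "vadd _ _ = None"

fun vsub :: "'g::linordered_ab_group_add option \<Rightarrow> 'g option \<Rightarrow> 'g option" where
  "vsub (Some x) (Some y) = Some (x - y)"
| "vsub _ _ = None"

fun vle :: "'g::linordered_ab_group_add option \<Rightarrow> 'g option \<Rightarrow> bool" where
  "vle _ None = True"
| "vle None (Some _) = False"
| "vle (Some x) (Some y) = (x \<le> y)"

definition vlt :: "'g::linordered_ab_group_add option \<Rightarrow> 'g option \<Rightarrow> bool" where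
  "vlt x y \<longleftrightarrow> vle x y \<and> x \<noteq> y"

definition vmin :: "'g::linordered_ab_group_add option \<Rightarrow> 'g option \<Rightarrow> 'g option" where
  "vmin x y = (if vle x y then x else y)"

definition minimal_prime :: "'a set \<Rightarrow> ('a, 'b) ring_scheme \<Rightarrow> bool" where
  "minimal_prime P R \<longleftrightarrow> primeideal P R \<and> (\<forall>Q. primeideal Q R \<and> Q \<subseteq> P \<longrightarrow> Q = P)"

definition noeth_local_ring :: "('a, 'b) ring_scheme \<Rightarrow> 'a set \<Rightarrow> bool" where
  "noeth_local_ring R m \<longleftrightarrow> cring R \<and> noetherian_ring R \<and> maximalideal m R \<and>
     (\<forall>M. maximalideal M R \<longrightarrow> M = m)"

definition loc_rel :: "('a, 'b) ring_scheme \<Rightarrow> 'a set \<Rightarrow> (('a \<times> 'a) \<times> ('a \<times> 'a)) set" where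
  "loc_rel R S = {((a, s), (c, t)). a \<in> carrier R \<and> c \<in> carrier R \<and> s \<in> S \<and> t \<in> S \<and>
      (\<exists>u\<in>S. u \<otimes>\<^bsub>R\<^esub> (a_minus R (a \<otimes>\<^bsub>R\<^esub> t) (c \<otimes>\<^bsub>R\<^esub> s)) = \<zero>\<^bsub>R\<^esub>)}"

definition frac :: "('a, 'b) ring_scheme \<Rightarrow> 'a set \<Rightarrow> 'a \<Rightarrow> 'a \<Rightarrow> ('a \<times> 'a) set" where
  "frac R S a s = loc_rel R S `` {(a, s)}"

definition pick :: "('a \<times> 'a) set \<Rightarrow> 'a \<times> 'a" where
  "pick U = (SOME q. q \<in> U)"

definition loc :: "('a, 'b) ring_scheme \<Rightarrow> 'a set \<Rightarrow> ('a \<times> 'a) set ring" where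
  "loc R S = \<lparr> carrier = (carrier R \<times> S) // loc_rel R S,
     monoid.mult = (\<lambda>U V. let (a, s) = pick U; (c, t) = pick V in
                frac R S (a \<otimes>\<^bsub>R\<^esub> c) (s \<otimes>\<^bsub>R\<^esub> t)),
     monoid.one = frac R S \<one>\<^bsub>R\<^esub> \<one>\<^bsub>R\<^esub>,
     ring.zero = frac R S \<zero>\<^bsub>R\<^esub> \<one>\<^bsub>R\<^esub>,
     ring.add = (\<lambda>U V. let (a, s) = pick U; (c, t) = pick V in
                frac R S ((a \<otimes>\<^bsub>R\<^esub> t) \<oplus>\<^bsub>R\<^esub> (c \<otimes>\<^bsub>R\<^esub> s)) (s \<otimes>\<^bsub>R\<^esub> t)) \<rparr>"

definition loc_prime :: "('a, 'b) ring_scheme \<Rightarrow> 'a set \<Rightarrow> ('a \<times> 'a) set ring" where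
  "loc_prime R P = loc R (carrier R - P)"

definition vsupp :: "('a, 'b) ring_scheme \<Rightarrow> ('a \<Rightarrow> 'g::linordered_ab_group_add option) \<Rightarrow> 'a set" where
  "vsupp R \<nu> = {a \<in> carrier R. \<nu> a = None}"

definition valuation :: "('a, 'b) ring_scheme \<Rightarrow> ('a \<Rightarrow> 'g::linordered_ab_group_add option) \<Rightarrow> bool" where
  "valuation R \<nu> \<longleftrightarrow>
     (\<forall>a\<in>carrier R. \<forall>b\<in>carrier R. \<nu> (a \<otimes>\<^bsub>R\<^esub> b) = vadd (\<nu> a) (\<nu> b)) \<and>
     (\<forall>a\<in>carrier R. \<forall>b\<in>carrier R. vle (vmin (\<nu> a) (\<nu> b)) (\<nu> (a \<oplus>\<^bsub>R\<^esub> b))) \<and>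
     \<nu> \<one>\<^bsub>R\<^esub> = Some 0 \<and> \<nu> \<zero>\<^bsub>R\<^esub> = None \<and>
     minimal_prime (vsupp R \<nu>) R"

definition has_center :: "('a, 'b) ring_scheme \<Rightarrow> ('a \<Rightarrow> 'g::linordered_ab_group_add option) \<Rightarrow> bool" where
  "has_center R \<nu> \<longleftrightarrow> (\<forall>a\<in>carrier R. vle (Some 0) (\<nu> a))"

definition vcenter :: "('a, 'b) ring_scheme \<Rightarrow> ('a \<Rightarrow> 'g::linordered_ab_group_add option) \<Rightarrow> 'a set" where
  "vcenter R \<nu> = {a \<in> carrier R. vlt (Some 0) (\<nu> a)}"

definition centered_on :: "('a, 'b) ring_scheme \<Rightarrow> 'a set \<Rightarrow> ('a \<Rightarrow> 'g::linordered_ab_group_add option) \<Rightarrow> bool" where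
  "centered_on R m \<nu> \<longleftrightarrow> has_center R \<nu> \<and> (\<forall>a\<in>m. vlt (Some 0) (\<nu> a))"

definition ext_val :: "('a \<Rightarrow> 'g::linordered_ab_group_add option) \<Rightarrow> ('a \<times> 'a) set \<Rightarrow> 'g option" where
  "ext_val \<nu> U = (case pick U of (a, s) \<Rightarrow> vsub (\<nu> a) (\<nu> s))"

definition add_subgroup :: "'g::linordered_ab_group_add set \<Rightarrow> bool" where
  "add_subgroup H \<longleftrightarrow> 0 \<in> H \<and> (\<forall>x\<in>H. \<forall>y\<in>H. x + y \<in> H) \<and> (\<forall>x\<in>H. - x \<in> H)"

definition value_group :: "('a, 'b) ring_scheme \<Rightarrow> ('a \<Rightarrow> 'g::linordered_ab_group_add option) \<Rightarrow> 'g set" where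
  "value_group R \<nu> = \<Inter>{H. add_subgroup H \<and> {g. \<exists>a\<in>carrier R. \<nu> a = Some g} \<subseteq> H}"

definition convex_subgroup :: "'g::linordered_ab_group_add set \<Rightarrow> 'g set \<Rightarrow> bool" where
  "convex_subgroup D G \<longleftrightarrow> add_subgroup D \<and> D \<subseteq> G \<and>
     (\<forall>x\<in>D. \<forall>y\<in>D. \<forall>z\<in>G. x \<le> z \<and> z \<le> y \<longrightarrow> z \<in> D)"

text \<open>Center of \<nu>1 (the valuation \<nu>(a) + \<Delta> with values in \<nu>R/\<Delta>):
  {a. \<nu>(a) > \<delta> for all \<delta> \<in> \<Delta>}, as in the paper.\<close>
definition center1 :: "('a, 'b) ring_scheme \<Rightarrow> ('a \<Rightarrow> 'g::linordered_ab_group_add option) \<Rightarrow> 'g set \<Rightarrow> 'a set" where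
  "center1 R \<nu> D = {a \<in> carrier R. \<forall>\<delta>\<in>D. vlt (Some \<delta>) (\<nu> a)}"

definition nu2 :: "('a, 'b) ring_scheme \<Rightarrow> ('a \<Rightarrow> 'g::linordered_ab_group_add option) \<Rightarrow> 'a set \<Rightarrow> 'a set \<Rightarrow> 'g option" where
  "nu2 R \<nu> P U = (if U \<subseteq> P then None else \<nu> (SOME a. a \<in> U))"

definition powers :: "('a, 'b) ring_scheme \<Rightarrow> 'a \<Rightarrow> 'a set" where
  "powers R b = {b [^]\<^bsub>R\<^esub> (n::nat) | n. True}"

definition loc_at :: "('a, 'b) ring_scheme \<Rightarrow> 'a \<Rightarrow> ('a \<times> 'a) set ring" where
  "loc_at R b = loc R (powers R b)"

text \<open>R' = (R/J(b))[a_1/b, ..., a_r/b] \<subseteq> R_b; here R/J(b) is the image of R in R_b.\<close>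
definition blowup_alg :: "('a, 'b) ring_scheme \<Rightarrow> 'a \<Rightarrow> 'a list \<Rightarrow> ('a \<times> 'a) set ring" where
  "blowup_alg R b as = (loc_at R b) \<lparr> carrier :=
      generate_ring (loc_at R b)
        ((\<lambda>x. frac R (powers R b) x \<one>\<^bsub>R\<^esub>) ` carrier R \<union>
         (\<lambda>a. frac R (powers R b) a b) ` set as) \<rparr>"

definition blowup :: "('a, 'b) ring_scheme \<Rightarrow> ('a \<Rightarrow> 'g::linordered_ab_group_add option) \<Rightarrow> 'a \<Rightarrow> 'a list
    \<Rightarrow> (('a \<times> 'a) set \<times> ('a \<times> 'a) set) set ring" where
  "blowup R \<nu> b as = loc_prime (blowup_alg R b as) (vcenter (blowup_alg R b as) (ext_val \<nu>))"

definition blowup_val :: "('a \<Rightarrow> 'g::linordered_ab_group_add option) \<Rightarrow> (('a \<times> 'a) set \<times> ('a \<times> 'a) set) set \<Rightarrow> 'g option" where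
  "blowup_val \<nu> = ext_val (ext_val \<nu>)"

definition blowup_data :: "('a, 'b) ring_scheme \<Rightarrow> ('a \<Rightarrow> 'g::linordered_ab_group_add option) \<Rightarrow> 'a \<Rightarrow> 'a list \<Rightarrow> bool" where
  "blowup_data R \<nu> b as \<longleftrightarrow> b \<in> carrier R - vsupp R \<nu> \<and> set as \<subseteq> carrier R \<and>
     (\<forall>a\<in>set as. vle (\<nu> b) (\<nu> a))"

end

theory Submission
  imports Defs
begin


locale locz = cring R for R (structure) + fixes S
  assumes S_sub: "S \<subseteq> carrier R" and one_S: "\<one> \<in> S"
    and mult_S: "\<lbrakk>s \<in> S; t \<in> S\<rbrakk> \<Longrightarrow> s \<otimes> t \<in> S"
begin

abbreviation L where "L \<equiv> loc R S"

lemma S_carr: "s \<in> S \<Longrightarrow> s \<in> carrier R" using S_sub by auto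

lemma rel_iff: "((a,s),(c,t)) \<in> loc_rel R S \<longleftrightarrow> a \<in> carrier R \<and> c \<in> carrier R \<and> s \<in> S \<and> t \<in> S \<and>
   (\<exists>u\<in>S. u \<otimes> (a \<otimes> t \<ominus> c \<otimes> s) = \<zero>)"
  unfolding loc_rel_def by auto

lemma equiv_rel: "equiv (carrier R \<times> S) (loc_rel R S)"
proof (rule equivI)
  show "loc_rel R S \<subseteq> (carrier R \<times> S) \<times> (carrier R \<times> S)" unfolding loc_rel_def by auto
  show "refl_on (carrier R \<times> S) (loc_rel R S)"
  proof (rule refl_onI)
    fix x assume "x \<in> carrier R \<times> S"
    then obtain a s where x: "x = (a,s)" "a \<in> carrier R" "s \<in> S" by auto
    have eq: "\<one> \<otimes> (a \<otimes> s \<ominus> a \<otimes> s) = \<zero>" using x by (simp add: r_neg minus_eq S_carr)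
    show "(x,x) \<in> loc_rel R S" unfolding x(1) rel_iff using x(2,3) one_S eq by blast
  qed
  show "sym (loc_rel R S)"
  proof (rule symI)
    fix x y assume "(x,y) \<in> loc_rel R S"
    then obtain a s c t u where xy: "x = (a,s)" "y = (c,t)" "a \<in> carrier R" "c \<in> carrier R" "s \<in> S" "t \<in> S"
      "u \<in> S" "u \<otimes> (a \<otimes> t \<ominus> c \<otimes> s) = \<zero>" by (cases x, cases y) (auto simp: rel_iff)
    have "u \<otimes> (c \<otimes> s \<ominus> a \<otimes> t) = \<ominus> (u \<otimes> (a \<otimes> t \<ominus> c \<otimes> s))"
      using xy(3,4) S_carr[OF xy(5)] S_carr[OF xy(6)] S_carr[OF xy(7)] by algebra
    then have "u \<otimes> (c \<otimes> s \<ominus> a \<otimes> t) = \<zero>" using xy(8) by simp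
    then show "(y,x) \<in> loc_rel R S" unfolding xy(1,2) rel_iff using xy(3-7) by blast
  qed
  show "trans (loc_rel R S)"
  proof (rule transI)
    fix x y z assume "(x,y) \<in> loc_rel R S" "(y,z) \<in> loc_rel R S"
    then obtain a s c t e t' u v where xy: "x = (a,s)" "y = (c,t)" "z = (e,t')" "a \<in> carrier R" "c \<in> carrier R" "e \<in> carrier R" "s \<in> S" "t \<in> S" "t' \<in> S"
      "u \<in> S" "u \<otimes> (a \<otimes> t \<ominus> c \<otimes> s) = \<zero>" "v \<in> S" "v \<otimes> (c \<otimes> t' \<ominus> e \<otimes> t) = \<zero>"
      by (cases x, cases y, cases z) (auto simp: rel_iff)
    have "(u \<otimes> v \<otimes> t) \<otimes> (a \<otimes> t' \<ominus> e \<otimes> s) = (v \<otimes> t') \<otimes> (u \<otimes> (a \<otimes> t \<ominus> c \<otimes> s)) \<oplus> (u \<otimes> s) \<otimes> (v \<otimes> (c \<otimes> t' \<ominus> e \<otimes> t))"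
      using xy(4,5,6) S_carr[OF xy(7)] S_carr[OF xy(8)] S_carr[OF xy(9)] S_carr[OF xy(10)] S_carr[OF xy(12)] by algebra
    then have "(u \<otimes> v \<otimes> t) \<otimes> (a \<otimes> t' \<ominus> e \<otimes> s) = \<zero>" using xy by (simp add: S_carr)
    moreover have "u \<otimes> v \<otimes> t \<in> S" using xy mult_S by auto
    ultimately show "(x,z) \<in> loc_rel R S" using xy by (auto simp: rel_iff)
  qed
qed

lemma frac_eq_iff: "\<lbrakk>a \<in> carrier R; c \<in> carrier R; s \<in> S; t \<in> S\<rbrakk> \<Longrightarrow>
   frac R S a s = frac R S c t \<longleftrightarrow> (\<exists>u\<in>S. u \<otimes> (a \<otimes> t \<ominus> c \<otimes> s) = \<zero>)"
  unfolding frac_def using equiv_class_eq_iff[OF equiv_rel, of "(a,s)" "(c,t)"] by (auto simp: rel_iff)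

lemma frac_eqI: "\<lbrakk>a \<in> carrier R; c \<in> carrier R; s \<in> S; t \<in> S; a \<otimes> t = c \<otimes> s\<rbrakk> \<Longrightarrow>
   frac R S a s = frac R S c t"
  by (subst frac_eq_iff) (auto intro!: bexI[of _ "\<one>"] simp: one_S r_neg minus_eq S_carr)

lemma frac_carrier[simp]: "\<lbrakk>a \<in> carrier R; s \<in> S\<rbrakk> \<Longrightarrow> frac R S a s \<in> carrier L"
  unfolding frac_def loc_def by (auto intro: quotientI)

lemma loc_carrierE: assumes "U \<in> carrier L"
  obtains a s where "a \<in> carrier R" "s \<in> S" "U = frac R S a s"
  using assms unfolding loc_def frac_def by (auto elim!: quotientE)

lemma self_in_frac: "\<lbrakk>a \<in> carrier R; s \<in> S\<rbrakk> \<Longrightarrow> (a,s) \<in> frac R S a s"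
  unfolding frac_def using equiv_class_self[OF equiv_rel, of "(a,s)"] by auto

lemma pick_frac: assumes "a \<in> carrier R" "s \<in> S"
  obtains a' s' where "pick (frac R S a s) = (a',s')" "a' \<in> carrier R" "s' \<in> S" "frac R S a' s' = frac R S a s"
proof -
  have "pick (frac R S a s) \<in> frac R S a s"
    unfolding pick_def by (rule someI, rule self_in_frac[OF assms])
  moreover obtain a' s' where p0: "pick (frac R S a s) = (a',s')" by (cases "pick (frac R S a s)") 
  ultimately have p: "pick (frac R S a s) = (a',s')" "((a,s),(a',s')) \<in> loc_rel R S"
    unfolding frac_def by auto
  then have "a' \<in> carrier R" "s' \<in> S" by (auto simp: rel_iff)
  moreover have "frac R S a' s' = frac R S a s"
    using p(2) unfolding frac_def using equiv_class_eq_iff[OF equiv_rel] by blast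
  ultimately show ?thesis using that p(1) by blast
qed

lemma frac_mult_cong: assumes "a \<in> carrier R" "a' \<in> carrier R" "c \<in> carrier R" "c' \<in> carrier R"
  "s \<in> S" "s' \<in> S" "t \<in> S" "t' \<in> S" "frac R S a' s' = frac R S a s" "frac R S c' t' = frac R S c t"
  shows "frac R S (a' \<otimes> c') (s' \<otimes> t') = frac R S (a \<otimes> c) (s \<otimes> t)"
proof -
  obtain u v where uv: "u \<in> S" "u \<otimes> (a' \<otimes> s \<ominus> a \<otimes> s') = \<zero>" "v \<in> S" "v \<otimes> (c' \<otimes> t \<ominus> c \<otimes> t') = \<zero>"
    using assms frac_eq_iff by meson
  have "(u \<otimes> v) \<otimes> ((a' \<otimes> c') \<otimes> (s \<otimes> t) \<ominus> (a \<otimes> c) \<otimes> (s' \<otimes> t')) = (v\<otimes>c'\<otimes>t) \<otimes> (u \<otimes> (a' \<otimes> s \<ominus> a \<otimes> s')) \<oplus> (u\<otimes>a\<otimes>s') \<otimes> (v \<otimes> (c' \<otimes> t \<ominus> c \<otimes> t'))"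
    using assms(1-4) S_carr[OF assms(5)] S_carr[OF assms(6)] S_carr[OF assms(7)] S_carr[OF assms(8)] S_carr[OF uv(1)] S_carr[OF uv(3)] by algebra
  moreover have "(v\<otimes>c'\<otimes>t) \<otimes> (u \<otimes> (a' \<otimes> s \<ominus> a \<otimes> s')) \<oplus> (u\<otimes>a\<otimes>s') \<otimes> (v \<otimes> (c' \<otimes> t \<ominus> c \<otimes> t')) = \<zero>" using uv assms by (simp add: S_carr)
  ultimately have "(u \<otimes> v) \<otimes> ((a' \<otimes> c') \<otimes> (s \<otimes> t) \<ominus> (a \<otimes> c) \<otimes> (s' \<otimes> t')) = \<zero>" by simp
  moreover have "u \<otimes> v \<in> S" using uv mult_S by auto
  ultimately show ?thesis using assms uv mult_S frac_eq_iff by (meson m_closed S_carr add.m_closed)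
qed

lemma frac_add_cong: assumes "a \<in> carrier R" "a' \<in> carrier R" "c \<in> carrier R" "c' \<in> carrier R"
  "s \<in> S" "s' \<in> S" "t \<in> S" "t' \<in> S" "frac R S a' s' = frac R S a s" "frac R S c' t' = frac R S c t"
  shows "frac R S (a' \<otimes> t' \<oplus> c' \<otimes> s') (s' \<otimes> t') = frac R S (a \<otimes> t \<oplus> c \<otimes> s) (s \<otimes> t)"
proof -
  obtain u v where uv: "u \<in> S" "u \<otimes> (a' \<otimes> s \<ominus> a \<otimes> s') = \<zero>" "v \<in> S" "v \<otimes> (c' \<otimes> t \<ominus> c \<otimes> t') = \<zero>"
    using assms frac_eq_iff by meson
  have "(u \<otimes> v) \<otimes> ((a' \<otimes> t' \<oplus> c' \<otimes> s') \<otimes> (s \<otimes> t) \<ominus> (a \<otimes> t \<oplus> c \<otimes> s) \<otimes> (s' \<otimes> t')) = (v\<otimes>t\<otimes>t') \<otimes> (u \<otimes> (a' \<otimes> s \<ominus> a \<otimes> s')) \<oplus> (u\<otimes>s\<otimes>s') \<otimes> (v \<otimes> (c' \<otimes> t \<ominus> c \<otimes> t'))"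
    using assms(1-4) S_carr[OF assms(5)] S_carr[OF assms(6)] S_carr[OF assms(7)] S_carr[OF assms(8)] S_carr[OF uv(1)] S_carr[OF uv(3)] by algebra
  moreover have "(v\<otimes>t\<otimes>t') \<otimes> (u \<otimes> (a' \<otimes> s \<ominus> a \<otimes> s')) \<oplus> (u\<otimes>s\<otimes>s') \<otimes> (v \<otimes> (c' \<otimes> t \<ominus> c \<otimes> t')) = \<zero>" using uv assms by (simp add: S_carr)
  ultimately have "(u \<otimes> v) \<otimes> ((a' \<otimes> t' \<oplus> c' \<otimes> s') \<otimes> (s \<otimes> t) \<ominus> (a \<otimes> t \<oplus> c \<otimes> s) \<otimes> (s' \<otimes> t')) = \<zero>" by simp
  moreover have "u \<otimes> v \<in> S" using uv mult_S by auto
  ultimately show ?thesis using assms uv mult_S frac_eq_iff by (meson m_closed S_carr add.m_closed)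
qed

lemma mult_frac: "\<lbrakk>a \<in> carrier R; c \<in> carrier R; s \<in> S; t \<in> S\<rbrakk> \<Longrightarrow>
  frac R S a s \<otimes>\<^bsub>L\<^esub> frac R S c t = frac R S (a \<otimes> c) (s \<otimes> t)"
  apply (rule pick_frac[of a s], assumption+)
  apply (rule pick_frac[of c t], assumption+)
  apply (simp add: loc_def)
  by (rule frac_mult_cong) auto

lemma add_frac: "\<lbrakk>a \<in> carrier R; c \<in> carrier R; s \<in> S; t \<in> S\<rbrakk> \<Longrightarrow>
  frac R S a s \<oplus>\<^bsub>L\<^esub> frac R S c t = frac R S (a \<otimes> t \<oplus> c \<otimes> s) (s \<otimes> t)"
  apply (rule pick_frac[of a s], assumption+)
  apply (rule pick_frac[of c t], assumption+)
  apply (simp add: loc_def)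
  by (rule frac_add_cong) auto

lemma one_loc: "\<one>\<^bsub>L\<^esub> = frac R S \<one> \<one>" by (simp add: loc_def)
lemma zero_loc: "\<zero>\<^bsub>L\<^esub> = frac R S \<zero> \<one>" by (simp add: loc_def)

lemma mult_S_carr: "s \<in> S \<Longrightarrow> t \<in> S \<Longrightarrow> s \<otimes> t \<in> S" by (rule mult_S)

lemmas fracsimps = mult_frac add_frac mult_S_carr

lemma loc_cases1: "U \<in> carrier L \<Longrightarrow> (\<And>a s. a \<in> carrier R \<Longrightarrow> s \<in> S \<Longrightarrow> s \<in> carrier R \<Longrightarrow> P (frac R S a s)) \<Longrightarrow> P U"
  by (erule loc_carrierE) (auto simp: S_carr)
lemma loc_cases2: "U \<in> carrier L \<Longrightarrow> V \<in> carrier L \<Longrightarrow> (\<And>a s c t. a \<in> carrier R \<Longrightarrow> s \<in> S \<Longrightarrow> c \<in> carrier R \<Longrightarrow> t \<in> S \<Longrightarrow> s \<in> carrier R \<Longrightarrow> t \<in> carrier R \<Longrightarrow> P (frac R S a s) (frac R S c t)) \<Longrightarrow> P U V"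
  by (erule loc_carrierE, erule loc_carrierE) (auto simp: S_carr)
lemma loc_cases3: "U \<in> carrier L \<Longrightarrow> V \<in> carrier L \<Longrightarrow> W \<in> carrier L \<Longrightarrow> (\<And>a s c t e r. a \<in> carrier R \<Longrightarrow> s \<in> S \<Longrightarrow> c \<in> carrier R \<Longrightarrow> t \<in> S  \<Longrightarrow> e \<in> carrier R \<Longrightarrow> r \<in> S \<Longrightarrow> s \<in> carrier R \<Longrightarrow> t \<in> carrier R \<Longrightarrow> r \<in> carrier R \<Longrightarrow> P (frac R S a s) (frac R S c t) (frac R S e r)) \<Longrightarrow> P U V W"
  by (erule loc_carrierE, erule loc_carrierE, erule loc_carrierE) (auto simp: S_carr)

lemma loc_cring: "cring L"
proof (rule cringI)
  show "abelian_group L"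
  proof (rule abelian_groupI)
    show "\<And>x y. x \<in> carrier L \<Longrightarrow> y \<in> carrier L \<Longrightarrow> x \<oplus>\<^bsub>L\<^esub> y \<in> carrier L"
      by (erule loc_cases2, assumption) (simp add: fracsimps)
    show "\<zero>\<^bsub>L\<^esub> \<in> carrier L" by (simp add: zero_loc one_S)
    show "\<And>x y z. x \<in> carrier L \<Longrightarrow> y \<in> carrier L \<Longrightarrow> z \<in> carrier L \<Longrightarrow> x \<oplus>\<^bsub>L\<^esub> y \<oplus>\<^bsub>L\<^esub> z = x \<oplus>\<^bsub>L\<^esub> (y \<oplus>\<^bsub>L\<^esub> z)"
      apply (erule loc_cases3, assumption, assumption)
      apply (simp add: fracsimps)
      apply (rule frac_eqI)
      apply (simp_all add: fracsimps)
      by (algebra)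
    show "\<And>x y. x \<in> carrier L \<Longrightarrow> y \<in> carrier L \<Longrightarrow> x \<oplus>\<^bsub>L\<^esub> y = y \<oplus>\<^bsub>L\<^esub> x"
      apply (erule loc_cases2, assumption)
      apply (simp add: fracsimps)
      apply (rule frac_eqI)
      apply (simp_all add: fracsimps)
      by (algebra)
    show "\<And>x. x \<in> carrier L \<Longrightarrow> \<zero>\<^bsub>L\<^esub> \<oplus>\<^bsub>L\<^esub> x = x"
      apply (erule loc_cases1)
      by (simp add: fracsimps zero_loc one_S)
    show "\<And>x. x \<in> carrier L \<Longrightarrow> \<exists>y\<in>carrier L. y \<oplus>\<^bsub>L\<^esub> x = \<zero>\<^bsub>L\<^esub>"
    proof -
      fix x assume "x \<in> carrier L"
      then show "\<exists>y\<in>carrier L. y \<oplus>\<^bsub>L\<^esub> x = \<zero>\<^bsub>L\<^esub>"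
      proof (rule loc_cases1)
        fix a s assume as: "a \<in> carrier R" "s \<in> S"
        have "frac R S (\<ominus> a) s \<oplus>\<^bsub>L\<^esub> frac R S a s = \<zero>\<^bsub>L\<^esub>"
          apply (simp add: fracsimps zero_loc one_S as)
          apply (rule frac_eqI)
          using as S_carr[OF as(2)] apply (simp_all add: fracsimps one_S)
          by (algebra)
        then show "\<exists>y\<in>carrier L. y \<oplus>\<^bsub>L\<^esub> frac R S a s = \<zero>\<^bsub>L\<^esub>" using as by (intro bexI[of _ "frac R S (\<ominus> a) s"]) auto
      qed
    qed
  qed
  show "comm_monoid L"
  proof (rule comm_monoidI)
    show "\<And>x y. x \<in> carrier L \<Longrightarrow> y \<in> carrier L \<Longrightarrow> x \<otimes>\<^bsub>L\<^esub> y \<in> carrier L"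
      by (erule loc_cases2, assumption) (simp add: fracsimps)
    show "\<one>\<^bsub>L\<^esub> \<in> carrier L" by (simp add: one_loc one_S)
    show "\<And>x y z. x \<in> carrier L \<Longrightarrow> y \<in> carrier L \<Longrightarrow> z \<in> carrier L \<Longrightarrow> x \<otimes>\<^bsub>L\<^esub> y \<otimes>\<^bsub>L\<^esub> z = x \<otimes>\<^bsub>L\<^esub> (y \<otimes>\<^bsub>L\<^esub> z)"
      apply (erule loc_cases3, assumption, assumption)
      apply (simp add: fracsimps)
      apply (rule frac_eqI)
      apply (simp_all add: fracsimps)
      by (algebra)
    show "\<And>x y. x \<in> carrier L \<Longrightarrow> y \<in> carrier L \<Longrightarrow> x \<otimes>\<^bsub>L\<^esub> y = y \<otimes>\<^bsub>L\<^esub> x"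
      apply (erule loc_cases2, assumption)
      apply (simp add: fracsimps)
      apply (rule frac_eqI)
      apply (simp_all add: fracsimps)
      by (algebra)
    show "\<And>x. x \<in> carrier L \<Longrightarrow> \<one>\<^bsub>L\<^esub> \<otimes>\<^bsub>L\<^esub> x = x"
      apply (erule loc_cases1)
      by (simp add: fracsimps one_loc one_S)
  qed
  show "\<And>x y z. x \<in> carrier L \<Longrightarrow> y \<in> carrier L \<Longrightarrow> z \<in> carrier L \<Longrightarrow> (x \<oplus>\<^bsub>L\<^esub> y) \<otimes>\<^bsub>L\<^esub> z = x \<otimes>\<^bsub>L\<^esub> z \<oplus>\<^bsub>L\<^esub> y \<otimes>\<^bsub>L\<^esub> z"
      apply (erule loc_cases3, assumption, assumption)
      apply (simp add: fracsimps)
      apply (rule frac_eqI)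
      apply (simp_all add: fracsimps)
      by (algebra)
qed


lemma iota_carrier[simp]: "a \<in> carrier R \<Longrightarrow> frac R S a \<one> \<in> carrier L"
  by (simp add: one_S)

lemma iota_hom: "(\<lambda>a. frac R S a \<one>) \<in> ring_hom R L"
proof (rule ring_hom_memI)
  fix x y assume xy: "x \<in> carrier R" "y \<in> carrier R"
  show "frac R S (x \<otimes> y) \<one> = frac R S x \<one> \<otimes>\<^bsub>L\<^esub> frac R S y \<one>"
    using xy by (simp add: fracsimps one_S)
  show "frac R S (x \<oplus> y) \<one> = frac R S x \<one> \<oplus>\<^bsub>L\<^esub> frac R S y \<one>"
    using xy by (simp add: fracsimps one_S)
qed (auto simp: one_loc)

lemma frac_times_iota: "\<lbrakk>a \<in> carrier R; s \<in> S\<rbrakk> \<Longrightarrow> frac R S a s \<otimes>\<^bsub>L\<^esub> frac R S s \<one> = frac R S a \<one>"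
  by (simp add: fracsimps one_S S_carr) (rule frac_eqI, auto simp: one_S S_carr m_comm mult_S m_assoc)

lemma iota_unit: "s \<in> S \<Longrightarrow> frac R S s \<one> \<in> Units L"
proof -
  assume s: "s \<in> S"
  have "frac R S \<one> s \<otimes>\<^bsub>L\<^esub> frac R S s \<one> = \<one>\<^bsub>L\<^esub>"
    using s frac_times_iota[of "\<one>" s] by (simp add: one_loc)
  moreover have "frac R S s \<one> \<otimes>\<^bsub>L\<^esub> frac R S \<one> s = \<one>\<^bsub>L\<^esub>"
    using s by (simp add: fracsimps one_S one_loc S_carr) (rule frac_eqI, auto simp: one_S S_carr mult_S m_comm)
  ultimately show ?thesis using s unfolding Units_def by (auto simp: one_S S_carr)
qed

lemma iota_kernel: "\<lbrakk>a \<in> carrier R; frac R S a \<one> = \<zero>\<^bsub>L\<^esub>\<rbrakk> \<Longrightarrow> \<exists>u\<in>S. u \<otimes> a = \<zero>"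
  unfolding zero_loc by (subst (asm) frac_eq_iff) (auto simp: one_S minus_eq S_carr)

end

definition is_loc :: "('a, 'm) ring_scheme \<Rightarrow> 'a set \<Rightarrow> ('c, 'n) ring_scheme \<Rightarrow> ('a \<Rightarrow> 'c) \<Rightarrow> bool" where
  "is_loc A S C f \<longleftrightarrow> f \<in> ring_hom A C \<and> (\<forall>s\<in>S. f s \<in> Units C) \<and>
     (\<forall>y\<in>carrier C. \<exists>x\<in>carrier A. \<exists>s\<in>S. y \<otimes>\<^bsub>C\<^esub> f s = f x) \<and>
     (\<forall>x\<in>carrier A. f x = \<zero>\<^bsub>C\<^esub> \<longrightarrow> (\<exists>s\<in>S. s \<otimes>\<^bsub>A\<^esub> x = \<zero>\<^bsub>A\<^esub>))"

lemma (in cring) div_char: "\<lbrakk>s \<in> Units R; a \<in> carrier R; x \<in> carrier R\<rbrakk> \<Longrightarrow> (x = a \<otimes> inv s) \<longleftrightarrow> (x \<otimes> s = a)"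
proof
  assume "s \<in> Units R" "a \<in> carrier R" "x \<in> carrier R" "x = a \<otimes> inv s"
  then show "x \<otimes> s = a" by (simp add: m_assoc Units_closed)
next
  assume h: "s \<in> Units R" "a \<in> carrier R" "x \<in> carrier R" "x \<otimes> s = a"
  have "a \<otimes> inv s = (x \<otimes> s) \<otimes> inv s" using h by simp
  also have "\<dots> = x \<otimes> (s \<otimes> inv s)" using h(1,3) by (simp add: m_assoc Units_closed)
  also have "\<dots> = x" using h(1,3) by simp
  finally show "x = a \<otimes> inv s" by (rule sym)
qed

lemma (in cring) unit_cancel0: "\<lbrakk>u \<in> Units R; w \<in> carrier R; u \<otimes> w = \<zero>\<rbrakk> \<Longrightarrow> w = \<zero>"
proof -
  assume h: "u \<in> Units R" "w \<in> carrier R" "u \<otimes> w = \<zero>"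
  then have "u \<otimes> w = u \<otimes> \<zero>" by (simp add: Units_closed)
  then show "w = \<zero>" using h Units_l_cancel by blast
qed

lemma (in locz) is_loc_loc: "is_loc R S L (\<lambda>a. frac R S a \<one>)"
  unfolding is_loc_def
proof (intro conjI ballI impI)
  show "(\<lambda>a. frac R S a \<one>) \<in> ring_hom R L" by (rule iota_hom)
  show "\<And>s. s \<in> S \<Longrightarrow> frac R S s \<one> \<in> Units L" by (rule iota_unit)
  show "\<And>x. x \<in> carrier R \<Longrightarrow> frac R S x \<one> = \<zero>\<^bsub>L\<^esub> \<Longrightarrow> \<exists>s\<in>S. s \<otimes> x = \<zero>" by (rule iota_kernel)
  fix y assume "y \<in> carrier L"
  then show "\<exists>x\<in>carrier R. \<exists>s\<in>S. y \<otimes>\<^bsub>L\<^esub> frac R S s \<one> = frac R S x \<one>"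
    by (rule loc_cases1) (auto intro!: frac_times_iota)
qed

locale locz_univ = locz R S + C: cring C for R (structure) and S and C (structure) + fixes f
  assumes f_hom: "f \<in> ring_hom R C" and f_units: "\<And>s. s \<in> S \<Longrightarrow> f s \<in> Units C"
begin

definition F where "F U = f (fst (pick U)) \<otimes>\<^bsub>C\<^esub> inv\<^bsub>C\<^esub> f (snd (pick U))"

lemma fc[simp]: "x \<in> carrier R \<Longrightarrow> f x \<in> carrier C" using f_hom by (simp add: ring_hom_closed)
lemma fm[simp]: "x \<in> carrier R \<Longrightarrow> y \<in> carrier R \<Longrightarrow> f (x \<otimes> y) = f x \<otimes>\<^bsub>C\<^esub> f y" using f_hom by (simp add: ring_hom_mult)
lemma fa[simp]: "x \<in> carrier R \<Longrightarrow> y \<in> carrier R \<Longrightarrow> f (x \<oplus> y) = f x \<oplus>\<^bsub>C\<^esub> f y" using f_hom by (simp add: ring_hom_add)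
lemma f1[simp]: "f \<one> = \<one>\<^bsub>C\<^esub>" using f_hom by (simp add: ring_hom_one)
sublocale H: ring_hom_cring R C f by unfold_locales (rule f_hom)
lemma fminus[simp]: "x \<in> carrier R \<Longrightarrow> y \<in> carrier R \<Longrightarrow> f (x \<ominus> y) = f x \<ominus>\<^bsub>C\<^esub> f y"
  by (simp add: a_minus_def)
lemma f0[simp]: "f \<zero> = \<zero>\<^bsub>C\<^esub>" by simp

lemma F_frac: assumes "a \<in> carrier R" "s \<in> S" shows "F (frac R S a s) = f a \<otimes>\<^bsub>C\<^esub> inv\<^bsub>C\<^esub> f s"
proof -
  obtain a' s' where p: "pick (frac R S a s) = (a',s')" "a' \<in> carrier R" "s' \<in> S" "frac R S a' s' = frac R S a s"
    using pick_frac[OF assms] by blast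
  then obtain u where u: "u \<in> S" "u \<otimes> (a' \<otimes> s \<ominus> a \<otimes> s') = \<zero>" using frac_eq_iff assms by meson
  have "f (u \<otimes> (a' \<otimes> s \<ominus> a \<otimes> s')) = \<zero>\<^bsub>C\<^esub>" by (simp only: u(2) f0)
  moreover have "f (u \<otimes> (a' \<otimes> s \<ominus> a \<otimes> s')) = f u \<otimes>\<^bsub>C\<^esub> (f a' \<otimes>\<^bsub>C\<^esub> f s \<ominus>\<^bsub>C\<^esub> f a \<otimes>\<^bsub>C\<^esub> f s')"
    using u(1) p(2,3) assms by (simp add: S_carr)
  ultimately have "f u \<otimes>\<^bsub>C\<^esub> (f a' \<otimes>\<^bsub>C\<^esub> f s \<ominus>\<^bsub>C\<^esub> f a \<otimes>\<^bsub>C\<^esub> f s') = \<zero>\<^bsub>C\<^esub>" by simp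
  then have z: "f a' \<otimes>\<^bsub>C\<^esub> f s \<ominus>\<^bsub>C\<^esub> f a \<otimes>\<^bsub>C\<^esub> f s' = \<zero>\<^bsub>C\<^esub>"
    by (rule C.unit_cancel0[OF f_units[OF u(1)], rotated]) (use p assms in \<open>simp add: S_carr\<close>)
  have e: "f a' \<otimes>\<^bsub>C\<^esub> f s = f a \<otimes>\<^bsub>C\<^esub> f s'"
    using C.r_right_minus_eq[of "f a' \<otimes>\<^bsub>C\<^esub> f s" "f a \<otimes>\<^bsub>C\<^esub> f s'"] z p assms by (simp add: S_carr)
  have "f a' \<otimes>\<^bsub>C\<^esub> inv\<^bsub>C\<^esub> f s' = f a \<otimes>\<^bsub>C\<^esub> inv\<^bsub>C\<^esub> f s"
  proof -
    have us: "f s \<in> Units C" "f s' \<in> Units C" using f_units p assms by auto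
    have "(f a' \<otimes>\<^bsub>C\<^esub> inv\<^bsub>C\<^esub> f s') \<otimes>\<^bsub>C\<^esub> f s = f a"
    proof -
      have "(f a' \<otimes>\<^bsub>C\<^esub> inv\<^bsub>C\<^esub> f s') \<otimes>\<^bsub>C\<^esub> f s = (f a' \<otimes>\<^bsub>C\<^esub> f s) \<otimes>\<^bsub>C\<^esub> inv\<^bsub>C\<^esub> f s'"
        using us p assms by (simp add: C.m_ac S_carr)
      also have "\<dots> = f a" using e us p assms C.div_char[of "f s'" "f a" "f a"] 
        by (simp add: C.m_assoc S_carr)
      finally show ?thesis .
    qed
    then show ?thesis using C.div_char us p assms by (simp add: S_carr)
  qed
  then show ?thesis unfolding F_def using p by simp
qed

lemma F_hom: "F \<in> ring_hom L C"
proof (rule ring_hom_memI)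
  fix x assume "x \<in> carrier L"
  then show "F x \<in> carrier C" by (rule loc_cases1) (simp add: F_frac f_units)
next
  fix x y assume "x \<in> carrier L" "y \<in> carrier L"
  then show "F (x \<otimes>\<^bsub>L\<^esub> y) = F x \<otimes>\<^bsub>C\<^esub> F y"
  proof (rule loc_cases2)
    fix a s c t assume h: "a \<in> carrier R" "s \<in> S" "c \<in> carrier R" "t \<in> S" "s \<in> carrier R" "t \<in> carrier R"
    have us: "f s \<in> Units C" "f t \<in> Units C" "f s \<otimes>\<^bsub>C\<^esub> f t \<in> Units C" using f_units h by auto
    have "F (frac R S a s) \<otimes>\<^bsub>C\<^esub> F (frac R S c t) = f (a \<otimes> c) \<otimes>\<^bsub>C\<^esub> inv\<^bsub>C\<^esub> f (s \<otimes> t)"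
      using h us
      apply (simp add: F_frac)
      apply (subst C.div_char, simp_all)
      apply (rule trans[of _ "(f a \<otimes>\<^bsub>C\<^esub> (inv\<^bsub>C\<^esub> f s \<otimes>\<^bsub>C\<^esub> f s)) \<otimes>\<^bsub>C\<^esub> (f c \<otimes>\<^bsub>C\<^esub> (inv\<^bsub>C\<^esub> f t \<otimes>\<^bsub>C\<^esub> f t))"])
       apply (simp add: C.m_ac)
      by simp
    then show "F (frac R S a s \<otimes>\<^bsub>L\<^esub> frac R S c t) = F (frac R S a s) \<otimes>\<^bsub>C\<^esub> F (frac R S c t)"
      using h by (simp add: fracsimps F_frac)
  qed
next
  fix x y assume "x \<in> carrier L" "y \<in> carrier L"
  then show "F (x \<oplus>\<^bsub>L\<^esub> y) = F x \<oplus>\<^bsub>C\<^esub> F y"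
  proof (rule loc_cases2)
    fix a s c t assume h: "a \<in> carrier R" "s \<in> S" "c \<in> carrier R" "t \<in> S" "s \<in> carrier R" "t \<in> carrier R"
    have us: "f s \<in> Units C" "f t \<in> Units C" "f s \<otimes>\<^bsub>C\<^esub> f t \<in> Units C" using f_units h by auto
    have "F (frac R S a s) \<oplus>\<^bsub>C\<^esub> F (frac R S c t) = f (a \<otimes> t \<oplus> c \<otimes> s) \<otimes>\<^bsub>C\<^esub> inv\<^bsub>C\<^esub> f (s \<otimes> t)"
    proof -
      have c: "f s \<in> carrier C" "f t \<in> carrier C" "f a \<in> carrier C" "f c \<in> carrier C"
        "inv\<^bsub>C\<^esub> f s \<in> carrier C" "inv\<^bsub>C\<^esub> f t \<in> carrier C" using h us by auto
      have "f s \<otimes>\<^bsub>C\<^esub> (f t \<otimes>\<^bsub>C\<^esub> (f a \<otimes>\<^bsub>C\<^esub> inv\<^bsub>C\<^esub> f s \<oplus>\<^bsub>C\<^esub> f c \<otimes>\<^bsub>C\<^esub> inv\<^bsub>C\<^esub> f t)) =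
         f t \<otimes>\<^bsub>C\<^esub> f a \<otimes>\<^bsub>C\<^esub> (f s \<otimes>\<^bsub>C\<^esub> inv\<^bsub>C\<^esub> f s) \<oplus>\<^bsub>C\<^esub> f s \<otimes>\<^bsub>C\<^esub> f c \<otimes>\<^bsub>C\<^esub> (f t \<otimes>\<^bsub>C\<^esub> inv\<^bsub>C\<^esub> f t)"
        using c by algebra
      also have "\<dots> = f a \<otimes>\<^bsub>C\<^esub> f t \<oplus>\<^bsub>C\<^esub> f c \<otimes>\<^bsub>C\<^esub> f s" using c us by (simp add: C.m_comm)
      finally have *: "f s \<otimes>\<^bsub>C\<^esub> (f t \<otimes>\<^bsub>C\<^esub> (f a \<otimes>\<^bsub>C\<^esub> inv\<^bsub>C\<^esub> f s \<oplus>\<^bsub>C\<^esub> f c \<otimes>\<^bsub>C\<^esub> inv\<^bsub>C\<^esub> f t)) = f a \<otimes>\<^bsub>C\<^esub> f t \<oplus>\<^bsub>C\<^esub> f c \<otimes>\<^bsub>C\<^esub> f s" .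
      show ?thesis using h us
        apply (simp add: F_frac)
        apply (subst C.div_char, simp_all)
        using * c by (simp add: C.m_ac)
    qed
    then show "F (frac R S a s \<oplus>\<^bsub>L\<^esub> frac R S c t) = F (frac R S a s) \<oplus>\<^bsub>C\<^esub> F (frac R S c t)"
      using h by (simp add: fracsimps F_frac)
  qed
next
  show "F \<one>\<^bsub>L\<^esub> = \<one>\<^bsub>C\<^esub>" by (simp add: one_loc F_frac one_S)
qed

lemma F_iota: "a \<in> carrier R \<Longrightarrow> F (frac R S a \<one>) = f a"
  by (simp add: F_frac one_S)

end

lemma (in locz) is_loc_iso: assumes "cring C" "is_loc R S C f" shows "L \<simeq> C"
proof -
  have "locz_univ R S C f" unfolding locz_univ_def locz_univ_axioms_def
    using locz_axioms assms unfolding is_loc_def by blast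
  then interpret U: locz_univ R S C f .
  have inj: "inj_on U.F (carrier L)"
  proof (rule inj_onI)
    fix x y assume xy: "x \<in> carrier L" "y \<in> carrier L" "U.F x = U.F y"
    obtain a s where as: "a \<in> carrier R" "s \<in> S" "x = frac R S a s" using xy(1) by (rule loc_carrierE)
    obtain c t where ct: "c \<in> carrier R" "t \<in> S" "y = frac R S c t" using xy(2) by (rule loc_carrierE)
    have us: "f s \<in> Units C" "f t \<in> Units C" using U.f_units as ct by auto
    have c: "f s \<in> carrier C" "f t \<in> carrier C" "f a \<in> carrier C" "f c \<in> carrier C"
          "inv\<^bsub>C\<^esub> f s \<in> carrier C" "inv\<^bsub>C\<^esub> f t \<in> carrier C" using as ct us by (auto simp: S_carr)
    define Xq where "Xq = f c \<otimes>\<^bsub>C\<^esub> inv\<^bsub>C\<^esub> f t"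
    have Xqc: "Xq \<in> carrier C" using c Xq_def by simp
    have eqF: "Xq = f a \<otimes>\<^bsub>C\<^esub> inv\<^bsub>C\<^esub> f s" using xy(3) as ct Xq_def by (simp add: U.F_frac)
    have Xq1: "Xq \<otimes>\<^bsub>C\<^esub> f s = f a" using U.C.div_char[OF us(1) c(3) Xqc] eqF by simp
    have Xq2: "Xq \<otimes>\<^bsub>C\<^esub> f t = f c" using U.C.div_char[OF us(2) c(4) Xqc] Xq_def by simp
    have "f a \<otimes>\<^bsub>C\<^esub> f t = (Xq \<otimes>\<^bsub>C\<^esub> f s) \<otimes>\<^bsub>C\<^esub> f t" by (simp only: Xq1)
    also have "\<dots> = (Xq \<otimes>\<^bsub>C\<^esub> f t) \<otimes>\<^bsub>C\<^esub> f s" using c Xqc by algebra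
    also have "\<dots> = f c \<otimes>\<^bsub>C\<^esub> f s" by (simp only: Xq2)
    finally have e: "f a \<otimes>\<^bsub>C\<^esub> f t = f c \<otimes>\<^bsub>C\<^esub> f s" .
    have "f (a \<otimes> t \<ominus> c \<otimes> s) = f a \<otimes>\<^bsub>C\<^esub> f t \<ominus>\<^bsub>C\<^esub> f c \<otimes>\<^bsub>C\<^esub> f s"
      using as ct by (simp add: S_carr)
    also have "\<dots> = \<zero>\<^bsub>C\<^esub>" using e c by simp
    finally have z: "f (a \<otimes> t \<ominus> c \<otimes> s) = \<zero>\<^bsub>C\<^esub>" .
    have "a \<otimes> t \<ominus> c \<otimes> s \<in> carrier R" using as ct by (simp add: S_carr)
    then obtain u where "u \<in> S" "u \<otimes> (a \<otimes> t \<ominus> c \<otimes> s) = \<zero>"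
      using assms(2) z unfolding is_loc_def by blast
    then show "x = y" using frac_eq_iff as ct by blast
  qed
  have surj: "U.F ` carrier L = carrier C"
  proof
    show "U.F ` carrier L \<subseteq> carrier C" using ring_hom_closed[OF U.F_hom] by auto
    show "carrier C \<subseteq> U.F ` carrier L"
    proof
      fix y assume y: "y \<in> carrier C"
      then obtain x s where xs: "x \<in> carrier R" "s \<in> S" "y \<otimes>\<^bsub>C\<^esub> f s = f x"
        using assms(2) unfolding is_loc_def by blast
      have "y = f x \<otimes>\<^bsub>C\<^esub> inv\<^bsub>C\<^esub> f s" using U.C.div_char[OF U.f_units[OF xs(2)] _ y] xs by simp
      then have "y = U.F (frac R S x s)" using U.F_frac xs by simp
      then show "y \<in> U.F ` carrier L" using xs by auto
    qed
  qed
  have bij: "bij_betw U.F (carrier L) (carrier C)" using inj surj by (rule bij_betw_imageI)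
  then show ?thesis unfolding is_ring_iso_def ring_iso_def using U.F_hom by auto
qed




lemma vadd_simps[simp]: "vadd x None = None" "vadd None x = None" by (cases x; simp)+
lemma vsub_simps[simp]: "vsub x None = None" "vsub None x = None" by (cases x; simp)+
lemma vle_refl[simp]: "vle x x" by (cases x) auto
lemma vle_antisym: "vle x y \<Longrightarrow> vle y x \<Longrightarrow> x = y" by (cases x; cases y) auto
lemma vle_trans: "vle x y \<Longrightarrow> vle y z \<Longrightarrow> vle x z" by (cases x; cases y; cases z) auto
lemma vmin_None[simp]: "vmin x None = x" "vmin None x = x" by (cases x; simp add: vmin_def)+
lemma vle_None_iff[simp]: "vle None x \<longleftrightarrow> x = None" by (cases x) auto

lemma vadd_cancel: "vadd x (Some p) = vadd y (Some q) \<Longrightarrow> vsub x (Some q) = vsub y (Some p)"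
  by (cases x; cases y) (auto simp: algebra_simps)

lemma vsub_mult: "vsub (vadd a c) (vadd (Some s) (Some t)) = vadd (vsub a (Some s)) (vsub c (Some t))"
  by (cases a; cases c) (auto simp: algebra_simps)

lemma vsub_ultra: "vle (vmin (vadd a (Some t)) (vadd c (Some s))) W \<Longrightarrow>
  vle (vmin (vsub a (Some s)) (vsub c (Some t))) (vsub W (vadd (Some s) (Some t)))"
  by (cases a; cases c; cases W) (auto simp: vmin_def algebra_simps le_diff_eq diff_le_eq split: if_splits)

definition preval :: "('a, 'b) ring_scheme \<Rightarrow> ('a \<Rightarrow> 'g::linordered_ab_group_add option) \<Rightarrow> bool" where
  "preval R w \<longleftrightarrow>
     (\<forall>a\<in>carrier R. \<forall>b\<in>carrier R. w (a \<otimes>\<^bsub>R\<^esub> b) = vadd (w a) (w b)) \<and>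
     (\<forall>a\<in>carrier R. \<forall>b\<in>carrier R. vle (vmin (w a) (w b)) (w (a \<oplus>\<^bsub>R\<^esub> b))) \<and>
     w \<one>\<^bsub>R\<^esub> = Some 0 \<and> w \<zero>\<^bsub>R\<^esub> = None"

locale pv = cring R for R (structure) + fixes w :: "'a \<Rightarrow> 'g::linordered_ab_group_add option"
  assumes pv: "preval R w"
begin

lemma w_mult: "a \<in> carrier R \<Longrightarrow> b \<in> carrier R \<Longrightarrow> w (a \<otimes> b) = vadd (w a) (w b)"
  using pv unfolding preval_def by auto
lemma w_add: "a \<in> carrier R \<Longrightarrow> b \<in> carrier R \<Longrightarrow> vle (vmin (w a) (w b)) (w (a \<oplus> b))"
  using pv unfolding preval_def by auto
lemma w_one[simp]: "w \<one> = Some 0" using pv unfolding preval_def by auto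
lemma w_zero[simp]: "w \<zero> = None" using pv unfolding preval_def by auto

lemma w_neg_one: "w (\<ominus> \<one>) = Some 0"
proof -
  have "\<ominus> \<one> \<otimes> \<ominus> \<one> = \<one>" by algebra
  then have "w (\<ominus> \<one> \<otimes> \<ominus> \<one>) = w \<one>" by simp
  then have "vadd (w (\<ominus> \<one>)) (w (\<ominus> \<one>)) = Some 0" by (simp add: w_mult)
  then obtain g where g: "w (\<ominus> \<one>) = Some g" "g + g = 0" by (cases "w (\<ominus> \<one>)") auto
  have "g = 0"
  proof (rule ccontr)
    assume "g \<noteq> 0"
    then have "g < 0 \<or> g > 0" by auto
    then show False using g(2) add_pos_pos[of g g] add_neg_neg[of g g] by auto
  qed
  then show ?thesis using g by simp
qed

lemma w_neg: "a \<in> carrier R \<Longrightarrow> w (\<ominus> a) = w a"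
proof -
  assume a: "a \<in> carrier R"
  have "\<ominus> a = \<ominus> \<one> \<otimes> a" using a by (simp add: l_minus)
  then have "w (\<ominus> a) = vadd (Some 0) (w a)" using a by (simp add: w_mult w_neg_one)
  then show ?thesis by (cases "w a") auto
qed

lemma w_minus_None: "a \<in> carrier R \<Longrightarrow> b \<in> carrier R \<Longrightarrow> w (a \<ominus> b) = None \<Longrightarrow> w a = w b"
proof -
  assume h: "a \<in> carrier R" "b \<in> carrier R" "w (a \<ominus> b) = None"
  have "a = (a \<ominus> b) \<oplus> b" using h by algebra
  then have 1: "vle (w b) (w a)" using w_add[of "a \<ominus> b" b] h by simp
  have "b = a \<oplus> \<ominus> (a \<ominus> b)" using h by algebra
  then have 2: "vle (w a) (w b)" using w_add[of a "\<ominus> (a \<ominus> b)"] h w_neg[of "a \<ominus> b"] by simp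
  show ?thesis using 1 2 vle_antisym by blast
qed

lemma w_pow_fin: "a \<in> carrier R \<Longrightarrow> w a \<noteq> None \<Longrightarrow> w (a [^] (n::nat)) \<noteq> None"
  by (induct n) (auto simp: w_mult nat_pow_Suc2)

end

locale lpv = locz R S + pv R w for R (structure) and S and w +
  assumes S_fin: "s \<in> S \<Longrightarrow> w s \<noteq> None"
begin

lemma ext_frac: assumes "a \<in> carrier R" "s \<in> S" shows "ext_val w (frac R S a s) = vsub (w a) (w s)"
proof -
  obtain a' s' where p: "pick (frac R S a s) = (a',s')" "a' \<in> carrier R" "s' \<in> S" "frac R S a' s' = frac R S a s"
    using pick_frac[OF assms] by blast
  then obtain u where u: "u \<in> S" "u \<otimes> (a' \<otimes> s \<ominus> a \<otimes> s') = \<zero>" using frac_eq_iff assms by meson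
  have c: "u \<in> carrier R" "s \<in> carrier R" "s' \<in> carrier R" using u p assms S_carr by auto
  have "vadd (w u) (w (a' \<otimes> s \<ominus> a \<otimes> s')) = None" using u c p assms by (simp add: w_mult[symmetric])
  then have "w (a' \<otimes> s \<ominus> a \<otimes> s') = None" using S_fin[OF u(1)] by (cases "w u"; cases "w (a' \<otimes> s \<ominus> a \<otimes> s')") auto
  then have "w (a' \<otimes> s) = w (a \<otimes> s')" using c p assms by (intro w_minus_None) auto
  then have "vadd (w a') (w s) = vadd (w a) (w s')" using c p assms by (simp add: w_mult)
  moreover obtain gs gs' where "w s = Some gs" "w s' = Some gs'" using S_fin p assms by blast
  ultimately have "vsub (w a') (w s') = vsub (w a) (w s)" using vadd_cancel by metis
  then show ?thesis unfolding ext_val_def using p by simp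
qed

lemma ext_iota: "a \<in> carrier R \<Longrightarrow> ext_val w (frac R S a \<one>) = w a"
  by (simp add: ext_frac one_S) (cases "w a", auto)

lemma ext_pv: "pv L (ext_val w)"
proof -
  interpret L: cring L by (rule loc_cring)
  show ?thesis
  proof (unfold_locales, unfold preval_def, intro conjI ballI)
    fix x y assume "x \<in> carrier L" "y \<in> carrier L"
    then show "ext_val w (x \<otimes>\<^bsub>L\<^esub> y) = vadd (ext_val w x) (ext_val w y)"
    proof (rule loc_cases2)
      fix a s c t assume h: "a \<in> carrier R" "s \<in> S" "c \<in> carrier R" "t \<in> S" "s \<in> carrier R" "t \<in> carrier R"
      obtain gs gt where g: "w s = Some gs" "w t = Some gt" using S_fin h by blast
      show "ext_val w (frac R S a s \<otimes>\<^bsub>L\<^esub> frac R S c t) = vadd (ext_val w (frac R S a s)) (ext_val w (frac R S c t))"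
        using h g by (simp add: fracsimps ext_frac w_mult vsub_mult[of _ _ gs gt, simplified])
    qed
  next
    fix x y assume "x \<in> carrier L" "y \<in> carrier L"
    then show "vle (vmin (ext_val w x) (ext_val w y)) (ext_val w (x \<oplus>\<^bsub>L\<^esub> y))"
    proof (rule loc_cases2)
      fix a s c t assume h: "a \<in> carrier R" "s \<in> S" "c \<in> carrier R" "t \<in> S" "s \<in> carrier R" "t \<in> carrier R"
      obtain gs gt where g: "w s = Some gs" "w t = Some gt" using S_fin h by blast
      have "vle (vmin (w (a \<otimes> t)) (w (c \<otimes> s))) (w (a \<otimes> t \<oplus> c \<otimes> s))" using h by (intro w_add) auto
      then have "vle (vmin (vadd (w a) (Some gt)) (vadd (w c) (Some gs))) (w (a \<otimes> t \<oplus> c \<otimes> s))"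
        using h g by (simp add: w_mult)
      from vsub_ultra[OF this]
      show "vle (vmin (ext_val w (frac R S a s)) (ext_val w (frac R S c t))) (ext_val w (frac R S a s \<oplus>\<^bsub>L\<^esub> frac R S c t))"
        using h g by (simp add: fracsimps ext_frac w_mult)
    qed
  next
    show "ext_val w \<one>\<^bsub>L\<^esub> = Some 0" by (simp add: one_loc ext_iota)
    show "ext_val w \<zero>\<^bsub>L\<^esub> = None" by (simp add: zero_loc ext_iota)
  qed
qed

end



lemma ring_hom_restrict_cod: "h \<in> ring_hom A C \<Longrightarrow> h ` carrier A \<subseteq> H \<Longrightarrow> h \<in> ring_hom A (C\<lparr>carrier := H\<rparr>)"
  unfolding ring_hom_def by auto

lemma ring_hom_restrict_dom: "h \<in> ring_hom A C \<Longrightarrow> H \<subseteq> carrier A \<Longrightarrow> h \<in> ring_hom (A\<lparr>carrier := H\<rparr>) C"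
  unfolding ring_hom_def by (auto simp: subset_iff)

locale bsetup = pv R \<nu> for R (structure) and \<nu> +
  fixes b as
  assumes cent: "has_center R \<nu>"
    and b_c: "b \<in> carrier R" and b_fin: "\<nu> b \<noteq> None" and as_c: "set as \<subseteq> carrier R"
    and as_v: "\<And>a. a \<in> set as \<Longrightarrow> vle (\<nu> b) (\<nu> a)"
begin

lemma cent': "a \<in> carrier R \<Longrightarrow> vle (Some 0) (\<nu> a)" using cent unfolding has_center_def by auto

lemma powers_sub: "powers R b \<subseteq> carrier R" unfolding powers_def using b_c by auto
lemma b_powers: "b \<in> powers R b" unfolding powers_def using b_c by (auto intro!: exI[of _ "1::nat"])

sublocale lb: lpv R "powers R b" \<nu>
proof (unfold_locales)
  show "powers R b \<subseteq> carrier R" by (rule powers_sub)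
  show "\<one> \<in> powers R b" unfolding powers_def by (auto intro!: exI[of _ "0::nat"])
  show "\<And>s t. s \<in> powers R b \<Longrightarrow> t \<in> powers R b \<Longrightarrow> s \<otimes> t \<in> powers R b"
    unfolding powers_def using b_c by (auto simp: nat_pow_mult)
  show "\<And>s. s \<in> powers R b \<Longrightarrow> \<nu> s \<noteq> None"
    unfolding powers_def using b_c b_fin w_pow_fin by auto
qed

abbreviation "Rb \<equiv> loc_at R b"
lemma Rb_def': "Rb = loc R (powers R b)" by (simp add: loc_at_def)

sublocale Rbc: cring Rb unfolding loc_at_def by (rule lb.loc_cring)
sublocale Rbp: pv Rb "ext_val \<nu>" unfolding loc_at_def by (rule lb.ext_pv)

definition "gens = (\<lambda>x. frac R (powers R b) x \<one>) ` carrier R \<union> (\<lambda>a. frac R (powers R b) a b) ` set as"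
abbreviation "G \<equiv> generate_ring Rb gens"
abbreviation "R' \<equiv> blowup_alg R b as"

lemma R'_def': "R' = Rb\<lparr>carrier := G\<rparr>" unfolding blowup_alg_def gens_def by simp

lemma gens_sub: "gens \<subseteq> carrier Rb"
  unfolding gens_def Rb_def' using as_c b_powers lb.one_S by auto

lemma G_sub: "G \<subseteq> carrier Rb" using Rbc.generate_ring_incl[OF gens_sub] .

lemma R'_carrier[simp]: "carrier R' = G" by (simp add: R'_def')
lemma R'_ops[simp]: "x \<otimes>\<^bsub>R'\<^esub> y = x \<otimes>\<^bsub>Rb\<^esub> y" "x \<oplus>\<^bsub>R'\<^esub> y = x \<oplus>\<^bsub>Rb\<^esub> y" "\<one>\<^bsub>R'\<^esub> = \<one>\<^bsub>Rb\<^esub>" "\<zero>\<^bsub>R'\<^esub> = \<zero>\<^bsub>Rb\<^esub>"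
  by (simp_all add: R'_def')

lemma R'_cring: "cring R'"
proof -
  have "subring G Rb" by (rule Rbc.generate_ring_is_subring[OF gens_sub])
  then have "subcring G Rb" by (rule Rbc.subcringI')
  then show ?thesis unfolding R'_def' using Rbc.subcring_iff[OF G_sub] by simp
qed

sublocale R'c: cring R' by (rule R'_cring)

lemma R'_pv: "pv R' (ext_val \<nu>)"
proof -
  show ?thesis
    unfolding pv_def pv_axioms_def preval_def
    using R'_cring G_sub Rbp.w_mult Rbp.w_add Rbp.w_one Rbp.w_zero by (auto simp: subset_iff)
qed

sublocale R'p: pv R' "ext_val \<nu>" by (rule R'_pv)

lemma iota_in_G: "x \<in> carrier R \<Longrightarrow> frac R (powers R b) x \<one> \<in> G"
  by (rule generate_ring.incl) (auto simp: gens_def)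

lemma ab_in_G: "a \<in> set as \<Longrightarrow> frac R (powers R b) a b \<in> G"
  by (rule generate_ring.incl) (auto simp: gens_def)

lemma has_center_R': "has_center R' (ext_val \<nu>)"
  unfolding has_center_def R'_carrier
proof
  fix V assume "V \<in> G"
  then show "vle (Some 0) (ext_val \<nu> V)"
  proof (induct rule: generate_ring.induct)
    case one
    then show ?case by (simp add: Rbp.w_one[simplified])
  next
    case (incl h)
    then show ?case
    proof (unfold gens_def, elim UnE imageE)
      fix x assume "x \<in> carrier R" "h = frac R (powers R b) x \<one>"
      then show ?thesis using lb.ext_iota cent' by simp
    next
      fix a assume a: "a \<in> set as" "h = frac R (powers R b) a b"
      then have "ext_val \<nu> h = vsub (\<nu> a) (\<nu> b)" using lb.ext_frac as_c b_powers by auto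
      then show ?thesis using as_v[OF a(1)] b_fin by (cases "\<nu> a"; cases "\<nu> b") auto
    qed
  next
    case (a_inv h)
    then show ?case using Rbp.w_neg G_sub by auto
  next
    case (eng_add h1 h2)
    then have "vle (vmin (ext_val \<nu> h1) (ext_val \<nu> h2)) (ext_val \<nu> (h1 \<oplus>\<^bsub>Rb\<^esub> h2))"
      using Rbp.w_add G_sub by auto
    then show ?case using eng_add(2,4) vle_trans unfolding vmin_def by (auto split: if_splits)
  next
    case (eng_mult h1 h2)
    then have "ext_val \<nu> (h1 \<otimes>\<^bsub>Rb\<^esub> h2) = vadd (ext_val \<nu> h1) (ext_val \<nu> h2)"
      using Rbp.w_mult G_sub by auto
    then show ?case using eng_mult(2,4) by (cases "ext_val \<nu> h1"; cases "ext_val \<nu> h2") auto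
  qed
qed

abbreviation "S' \<equiv> carrier R' - vcenter R' (ext_val \<nu>)"

lemma S'_iff: "V \<in> S' \<longleftrightarrow> V \<in> G \<and> ext_val \<nu> V = Some 0"
proof -
  have "V \<in> G \<Longrightarrow> vle (Some 0) (ext_val \<nu> V)" using has_center_R' unfolding has_center_def by auto
  then show ?thesis unfolding vcenter_def vlt_def by (cases "ext_val \<nu> V") auto
qed

sublocale l': lpv R' S' "ext_val \<nu>"
proof (unfold_locales)
  show "S' \<subseteq> carrier R'" by auto
  show "\<one>\<^bsub>R'\<^esub> \<in> S'" using S'_iff[of "\<one>\<^bsub>Rb\<^esub>"] generate_ring.one[of Rb gens] Rbp.w_one by simp
  show "\<And>s t. s \<in> S' \<Longrightarrow> t \<in> S' \<Longrightarrow> s \<otimes>\<^bsub>R'\<^esub> t \<in> S'"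
  proof -
    fix s t assume "s \<in> S'" "t \<in> S'"
    then have h: "s \<in> G" "t \<in> G" "ext_val \<nu> s = Some 0" "ext_val \<nu> t = Some 0" using S'_iff[of s] S'_iff[of t] by auto
    then have "ext_val \<nu> (s \<otimes>\<^bsub>R'\<^esub> t) = Some 0" using R'p.w_mult[of s t] by simp
    moreover have "s \<otimes>\<^bsub>R'\<^esub> t \<in> G" using R'c.m_closed[of s t] h by simp
    ultimately show "s \<otimes>\<^bsub>R'\<^esub> t \<in> S'" using S'_iff[of "s \<otimes>\<^bsub>R'\<^esub> t"] by blast
  qed
  show "\<And>s. s \<in> S' \<Longrightarrow> ext_val \<nu> s \<noteq> None" using S'_iff by auto
qed

abbreviation "R1 \<equiv> loc R' S'"
lemma R1_def': "blowup R \<nu> b as = R1" unfolding blowup_def loc_prime_def by simp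

sublocale R1c: cring R1 by (rule l'.loc_cring)
sublocale R1p: pv R1 "blowup_val \<nu>" unfolding blowup_val_def by (rule l'.ext_pv)

end



lemma vlt_vle_trans: "vlt x y \<Longrightarrow> vle y z \<Longrightarrow> vlt x z"
  unfolding vlt_def by (cases x; cases y; cases z) auto
lemma vmin_lt: "vlt a x \<Longrightarrow> vlt a y \<Longrightarrow> vlt a (vmin x y)" unfolding vmin_def by auto
lemma vlt_add_nonneg: assumes "vlt (Some d) x" "vle (Some 0) y" shows "vlt (Some d) (vadd x y)"
proof (cases x)
  case None then show ?thesis by (simp add: vlt_def)
next
  case (Some g)
  show ?thesis
  proof (cases y)
    case None then show ?thesis using Some by (simp add: vlt_def)
  next
    case (Some h)
    from assms Some \<open>x = Some g\<close> have "d < g" "0 \<le> h" by (auto simp: vlt_def)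
    then have "d < g + h" using add_strict_increasing2[of h d g] by (simp add: add.commute)
    then show ?thesis using Some \<open>x = Some g\<close> by (auto simp: vlt_def)
  qed
qed

locale dsetup = pv R \<nu> for R (structure) and \<nu> + fixes \<Delta>
  assumes centD: "has_center R \<nu>" and conv: "convex_subgroup \<Delta> (value_group R \<nu>)"
begin

abbreviation "P \<equiv> center1 R \<nu> \<Delta>"

lemma D0: "0 \<in> \<Delta>" and Dadd: "x \<in> \<Delta> \<Longrightarrow> y \<in> \<Delta> \<Longrightarrow> x + y \<in> \<Delta>" and Dneg: "x \<in> \<Delta> \<Longrightarrow> - x \<in> \<Delta>"
  using conv unfolding convex_subgroup_def add_subgroup_def by blast+

lemma val_VG: "a \<in> carrier R \<Longrightarrow> \<nu> a = Some g \<Longrightarrow> g \<in> value_group R \<nu>"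
  unfolding value_group_def by auto

lemma centD': "a \<in> carrier R \<Longrightarrow> vle (Some 0) (\<nu> a)" using centD unfolding has_center_def by auto

lemma P_iff: "a \<in> P \<longleftrightarrow> a \<in> carrier R \<and> (\<forall>\<delta>\<in>\<Delta>. vlt (Some \<delta>) (\<nu> a))"
  unfolding center1_def by auto

lemma notP_fin: assumes "a \<in> carrier R" "a \<notin> P" obtains g where "\<nu> a = Some g" "g \<in> \<Delta>"
proof -
  obtain \<delta> where d: "\<delta> \<in> \<Delta>" "\<not> vlt (Some \<delta>) (\<nu> a)" using assms P_iff by auto
  then obtain g where g: "\<nu> a = Some g" "g \<le> \<delta>" unfolding vlt_def by (cases "\<nu> a") auto
  have "0 \<le> g" using centD'[OF assms(1)] g by simp
  then have "g \<in> \<Delta>" using conv d g val_VG[OF assms(1) g(1)] D0 unfolding convex_subgroup_def by blast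
  then show ?thesis using g that by blast
qed

lemma transfer: assumes "s \<in> carrier R" "s \<notin> P" "x \<in> carrier R" "vadd W (\<nu> s) = \<nu> x"
  shows "(\<forall>\<delta>\<in>\<Delta>. vlt (Some \<delta>) W) \<longleftrightarrow> x \<in> P"
proof -
  obtain g where g: "\<nu> s = Some g" "g \<in> \<Delta>" using notP_fin assms by blast
  show ?thesis
  proof (cases W)
    case None
    then show ?thesis using assms g P_iff by (auto simp: vlt_def)
  next
    case (Some c)
    then have nx: "\<nu> x = Some (c + g)" using assms g by simp
    have "(\<forall>\<delta>\<in>\<Delta>. \<delta> < c) \<longleftrightarrow> (\<forall>\<delta>\<in>\<Delta>. \<delta> < c + g)"
    proof
      assume h: "\<forall>\<delta>\<in>\<Delta>. \<delta> < c"
      show "\<forall>\<delta>\<in>\<Delta>. \<delta> < c + g"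
      proof
        fix \<delta> assume "\<delta> \<in> \<Delta>"
        then have "\<delta> + - g \<in> \<Delta>" using Dadd[OF _ Dneg[OF g(2)]] by blast
        then have "\<delta> + - g < c" using h by auto
        then show "\<delta> < c + g" by (simp add: algebra_simps)
      qed
    next
      assume h: "\<forall>\<delta>\<in>\<Delta>. \<delta> < c + g"
      show "\<forall>\<delta>\<in>\<Delta>. \<delta> < c"
      proof
        fix \<delta> assume "\<delta> \<in> \<Delta>"
        then have "\<delta> + g \<in> \<Delta>" using Dadd g by auto
        then have "\<delta> + g < c + g" using h by auto
        then show "\<delta> < c" by simp
      qed
    qed
    then show ?thesis using Some nx assms(3) P_iff by (auto simp: vlt_def)
  qed
qed

lemma P_mult: assumes "a \<in> carrier R" "c \<in> carrier R" shows "a \<otimes> c \<in> P \<longleftrightarrow> a \<in> P \<or> c \<in> P"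
proof
  assume hP: "a \<otimes> c \<in> P"
  show "a \<in> P \<or> c \<in> P"
  proof (rule ccontr)
    assume "\<not> (a \<in> P \<or> c \<in> P)"
    then have "a \<notin> P" "c \<notin> P" by auto
    obtain g where g: "\<nu> a = Some g" "g \<in> \<Delta>" using notP_fin[OF assms(1) \<open>a \<notin> P\<close>] by blast
    obtain h where h: "\<nu> c = Some h" "h \<in> \<Delta>" using notP_fin[OF assms(2) \<open>c \<notin> P\<close>] by blast
    note gh = g h
    then have "\<nu> (a \<otimes> c) = Some (g + h)" "g + h \<in> \<Delta>" using w_mult assms Dadd by auto
    then show False using hP P_iff[of "a \<otimes> c"] by (auto simp: vlt_def)
  qed
next
  assume "a \<in> P \<or> c \<in> P"
  then show "a \<otimes> c \<in> P"
  proof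
    assume "a \<in> P"
    then show ?thesis using assms centD'[of c] w_mult[of a c] vlt_add_nonneg unfolding P_iff by auto
  next
    assume "c \<in> P"
    moreover have "vadd (\<nu> a) (\<nu> c) = vadd (\<nu> c) (\<nu> a)" by (cases "\<nu> a"; cases "\<nu> c") (auto simp: add.commute)
    ultimately show ?thesis using assms centD'[of a] w_mult[of a c] vlt_add_nonneg unfolding P_iff by auto
  qed
qed

lemma one_notP: "\<one> \<notin> P" using D0 P_iff by (auto simp: vlt_def)
lemma zero_P: "\<zero> \<in> P" using P_iff by (auto simp: vlt_def)

lemma P_add: assumes "a \<in> P" "c \<in> P" shows "a \<oplus> c \<in> P"
proof -
  have ac: "a \<in> carrier R" "c \<in> carrier R" using assms P_iff by auto
  have "vle (vmin (\<nu> a) (\<nu> c)) (\<nu> (a \<oplus> c))" using w_add ac by auto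
  then show ?thesis using assms ac vmin_lt vlt_vle_trans unfolding P_iff by blast
qed

lemma P_neg: "a \<in> P \<Longrightarrow> \<ominus> a \<in> P" using w_neg P_iff by auto

lemma P_ideal: "ideal P R"
proof (intro subgroup.intro idealI[OF ring_axioms], simp_all add: a_inv_def[symmetric])
  show "P \<subseteq> carrier R" using P_iff by auto
  show "\<And>x y. x \<in> P \<Longrightarrow> y \<in> P \<Longrightarrow> x \<oplus> y \<in> P" by (rule P_add)
  show "\<zero> \<in> P" by (rule zero_P)
  show "\<And>x. x \<in> P \<Longrightarrow> \<ominus> x \<in> P" by (rule P_neg)
  show "\<And>a x. a \<in> P \<Longrightarrow> x \<in> carrier R \<Longrightarrow> x \<otimes> a \<in> P" using P_mult P_iff by blast
  show "\<And>a x. a \<in> P \<Longrightarrow> x \<in> carrier R \<Longrightarrow> a \<otimes> x \<in> P" using P_mult P_iff by blast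
qed

lemma same_val_P: "a \<in> carrier R \<Longrightarrow> c \<in> carrier R \<Longrightarrow> \<nu> a = \<nu> c \<Longrightarrow> a \<in> P \<longleftrightarrow> c \<in> P"
  using P_iff by auto

lemma notP_mS: "a \<in> carrier R - P \<Longrightarrow> c \<in> carrier R - P \<Longrightarrow> a \<otimes> c \<in> carrier R - P"
  using P_mult by auto

sublocale lP: locz R "carrier R - P"
proof
  show "carrier R - P \<subseteq> carrier R" by auto
  show "\<one> \<in> carrier R - P" using one_notP by simp
  show "\<And>s t. s \<in> carrier R - P \<Longrightarrow> t \<in> carrier R - P \<Longrightarrow> s \<otimes> t \<in> carrier R - P" by (rule notP_mS)
qed

end

lemma (in cring) comb3: assumes c: "Z \<in> carrier R" "v1 \<in> carrier R" "v2 \<in> carrier R" "p1 \<in> carrier R" "p2 \<in> carrier R"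
  and E1: "Z \<otimes> v2 = v1" and E2: "v1 \<otimes> p1 = c" and E3: "v2 \<otimes> p2 = d"
  shows "Z \<otimes> (d \<otimes> p1) = c \<otimes> p2"
proof -
  have "Z \<otimes> (d \<otimes> p1) = Z \<otimes> ((v2 \<otimes> p2) \<otimes> p1)" by (simp only: E3)
  also have "\<dots> = (Z \<otimes> v2) \<otimes> p1 \<otimes> p2" using c by algebra
  also have "\<dots> = v1 \<otimes> p1 \<otimes> p2" by (simp only: E1)
  also have "\<dots> = c \<otimes> p2" by (simp only: E2)
  finally show ?thesis .
qed

lemma (in cring) comb0: assumes c: "Y \<in> carrier R" "u \<in> carrier R" "p \<in> carrier R"
  and E1: "Y \<otimes> u = \<zero>" and E2: "Y \<otimes> p = q"
  shows "q \<otimes> u = \<zero>"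
proof -
  have "q \<otimes> u = (Y \<otimes> p) \<otimes> u" by (simp only: E2)
  also have "\<dots> = (Y \<otimes> u) \<otimes> p" using c by algebra
  also have "\<dots> = \<zero>" using c by (simp only: E1) simp
  finally show ?thesis .
qed

context bsetup begin

abbreviation "ib x \<equiv> frac R (powers R b) x \<one>"
abbreviation "hh V \<equiv> frac R' S' V \<one>\<^bsub>R'\<^esub>"
abbreviation "kk x \<equiv> hh (ib x)"
lemma ib_hom: "ib \<in> ring_hom R Rb" using lb.iota_hom by (simp add: loc_at_def)
lemma ib_hom': "ib \<in> ring_hom R R'"
  unfolding R'_def' by (rule ring_hom_restrict_cod[OF ib_hom]) (auto intro: iota_in_G)
lemma hh_hom: "hh \<in> ring_hom R' R1" by (rule l'.iota_hom)
lemma kk_hom: "kk \<in> ring_hom R R1" using ring_hom_trans[OF ib_hom' hh_hom] by (simp add: comp_def)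

lemma kk_c: "x \<in> carrier R \<Longrightarrow> kk x \<in> carrier R1" using ring_hom_closed[OF kk_hom] .

lemma e_ib: "x \<in> carrier R \<Longrightarrow> ext_val \<nu> (ib x) = \<nu> x" by (rule lb.ext_iota)
lemma bv_hh: "V \<in> G \<Longrightarrow> blowup_val \<nu> (hh V) = ext_val \<nu> V" unfolding blowup_val_def using l'.ext_iota by simp
lemma bv_kk: "x \<in> carrier R \<Longrightarrow> blowup_val \<nu> (kk x) = \<nu> x" using bv_hh iota_in_G e_ib by simp

lemma Rb_rep: assumes "V \<in> carrier Rb" obtains x \<beta> where "x \<in> carrier R" "\<beta> \<in> powers R b" "V \<otimes>\<^bsub>Rb\<^esub> ib \<beta> = ib x"
  using lb.is_loc_loc assms unfolding is_loc_def loc_at_def by blast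

lemma Rb_val: "V \<in> carrier Rb \<Longrightarrow> x \<in> carrier R \<Longrightarrow> \<beta> \<in> powers R b \<Longrightarrow> V \<otimes>\<^bsub>Rb\<^esub> ib \<beta> = ib x \<Longrightarrow>
   vadd (ext_val \<nu> V) (\<nu> \<beta>) = \<nu> x"
proof -
  assume h: "V \<in> carrier Rb" "x \<in> carrier R" "\<beta> \<in> powers R b" "V \<otimes>\<^bsub>Rb\<^esub> ib \<beta> = ib x"
  have "\<beta> \<in> carrier R" using h powers_sub by auto
  then have "ib \<beta> \<in> carrier Rb" using lb.iota_carrier by (simp add: loc_at_def)
  then have "ext_val \<nu> (V \<otimes>\<^bsub>Rb\<^esub> ib \<beta>) = vadd (ext_val \<nu> V) (ext_val \<nu> (ib \<beta>))"
    using Rbp.w_mult h(1) by blast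
  then show ?thesis using h(2,4) e_ib \<open>\<beta> \<in> carrier R\<close> by simp
qed


lemma S'_rep0: assumes "V \<in> S'" obtains d \<beta> where "d \<in> carrier R" "\<beta> \<in> powers R b" "V \<otimes>\<^bsub>Rb\<^esub> ib \<beta> = ib d" "\<nu> d = \<nu> \<beta>"
proof -
  have V: "V \<in> G" "ext_val \<nu> V = Some 0" using assms S'_iff by auto
  then have "V \<in> carrier Rb" using G_sub by auto
  then obtain d \<beta> where d: "d \<in> carrier R" "\<beta> \<in> powers R b" "V \<otimes>\<^bsub>Rb\<^esub> ib \<beta> = ib d" by (rule Rb_rep)
  then have "vadd (Some 0) (\<nu> \<beta>) = \<nu> d" using Rb_val \<open>V \<in> carrier Rb\<close> V by metis
  then have "\<nu> d = \<nu> \<beta>" by (cases "\<nu> \<beta>") auto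
  then show ?thesis using that d by blast
qed

end

locale msetup = dsetup R \<nu> \<Delta> + bsetup R \<nu> b as for R (structure) and \<nu> \<Delta> b as +
  assumes b_notP: "b \<notin> P"
begin

abbreviation "p1 \<equiv> center1 R1 (blowup_val \<nu>) \<Delta>"

lemma powers_notP: "\<beta> \<in> powers R b \<Longrightarrow> \<beta> \<in> carrier R - P"
proof -
  have "b [^] (n::nat) \<in> carrier R - P" for n
    by (induct n) (use one_notP b_c b_notP P_mult in \<open>auto simp: nat_pow_Suc2\<close>)
  then show "\<beta> \<in> powers R b \<Longrightarrow> \<beta> \<in> carrier R - P" unfolding powers_def by auto
qed

lemma S'_rep: assumes "V \<in> S'" obtains d \<beta> where "d \<in> carrier R - P" "\<beta> \<in> powers R b" "V \<otimes>\<^bsub>Rb\<^esub> ib \<beta> = ib d"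
proof -
  have V: "V \<in> G" "ext_val \<nu> V = Some 0" using assms S'_iff by auto
  then have "V \<in> carrier Rb" using G_sub by auto
  then obtain d \<beta> where d: "d \<in> carrier R" "\<beta> \<in> powers R b" "V \<otimes>\<^bsub>Rb\<^esub> ib \<beta> = ib d" by (rule Rb_rep)
  then have "vadd (Some 0) (\<nu> \<beta>) = \<nu> d" using Rb_val \<open>V \<in> carrier Rb\<close> V by metis
  then have "\<nu> \<beta> = \<nu> d" by (cases "\<nu> \<beta>") auto
  then have "d \<notin> P" using same_val_P[of \<beta> d] powers_notP[OF d(2)] d(1) by auto
  then show ?thesis using that d by blast
qed


lemma hh_mult: "V \<in> G \<Longrightarrow> W \<in> G \<Longrightarrow> hh (V \<otimes>\<^bsub>Rb\<^esub> W) = hh V \<otimes>\<^bsub>R1\<^esub> hh W"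
  using ring_hom_mult[OF hh_hom, of V W] by simp
lemma kk_mult: "x \<in> carrier R \<Longrightarrow> y \<in> carrier R \<Longrightarrow> kk (x \<otimes> y) = kk x \<otimes>\<^bsub>R1\<^esub> kk y"
  using ring_hom_mult[OF kk_hom] by simp
lemma hh_c: "V \<in> G \<Longrightarrow> hh V \<in> carrier R1" using ring_hom_closed[OF hh_hom] by simp

lemma R1_rep: assumes "Z \<in> carrier R1" obtains x s where "x \<in> carrier R" "s \<in> carrier R - P" "Z \<otimes>\<^bsub>R1\<^esub> kk s = kk x"
proof -
  obtain V1 V2 where V: "V1 \<in> carrier R'" "V2 \<in> S'" "Z \<otimes>\<^bsub>R1\<^esub> hh V2 = hh V1"
    using l'.is_loc_loc assms unfolding is_loc_def by blast
  have V1: "V1 \<in> G" "V1 \<in> carrier Rb" using V G_sub by auto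
  have V2: "V2 \<in> G" using V by auto
  obtain c \<beta>1 where c: "c \<in> carrier R" "\<beta>1 \<in> powers R b" "V1 \<otimes>\<^bsub>Rb\<^esub> ib \<beta>1 = ib c" using Rb_rep[OF V1(2)] by blast
  obtain d \<beta>2 where d: "d \<in> carrier R - P" "\<beta>2 \<in> powers R b" "V2 \<otimes>\<^bsub>Rb\<^esub> ib \<beta>2 = ib d" using S'_rep[OF V(2)] by blast
  have b1: "\<beta>1 \<in> carrier R - P" "\<beta>2 \<in> carrier R - P" using powers_notP c d by auto
  have E2: "hh V1 \<otimes>\<^bsub>R1\<^esub> kk \<beta>1 = kk c" using hh_mult[OF V1(1) iota_in_G, of \<beta>1] c b1 by simp
  have E3: "hh V2 \<otimes>\<^bsub>R1\<^esub> kk \<beta>2 = kk d" using hh_mult[OF V2 iota_in_G, of \<beta>2] d b1 by simp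
  have "Z \<otimes>\<^bsub>R1\<^esub> (kk d \<otimes>\<^bsub>R1\<^esub> kk \<beta>1) = kk c \<otimes>\<^bsub>R1\<^esub> kk \<beta>2"
    by (rule R1c.comb3[OF assms hh_c[OF V1(1)] hh_c[OF V2] kk_c kk_c V(3) E2 E3]) (use b1 in auto)
  then have "Z \<otimes>\<^bsub>R1\<^esub> kk (d \<otimes> \<beta>1) = kk (c \<otimes> \<beta>2)" using kk_mult b1 c d by simp
  moreover have "d \<otimes> \<beta>1 \<in> carrier R - P" using notP_mS d b1 by auto
  moreover have "c \<otimes> \<beta>2 \<in> carrier R" using c b1 by auto
  ultimately show ?thesis using that by blast
qed

lemma p1_iff: assumes "Z \<in> carrier R1" "Z \<otimes>\<^bsub>R1\<^esub> kk s = kk x" "s \<in> carrier R - P" "x \<in> carrier R"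
  shows "Z \<in> p1 \<longleftrightarrow> x \<in> P"
proof -
  have "blowup_val \<nu> (Z \<otimes>\<^bsub>R1\<^esub> kk s) = vadd (blowup_val \<nu> Z) (blowup_val \<nu> (kk s))"
    using R1p.w_mult assms kk_c by blast
  then have "vadd (blowup_val \<nu> Z) (\<nu> s) = \<nu> x" using assms bv_kk by simp
  then have "(\<forall>\<delta>\<in>\<Delta>. vlt (Some \<delta>) (blowup_val \<nu> Z)) \<longleftrightarrow> x \<in> P" using transfer assms by blast
  then show ?thesis using assms(1) unfolding center1_def by blast
qed

sublocale l1: locz R1 "carrier R1 - p1"
proof
  show "carrier R1 - p1 \<subseteq> carrier R1" by auto
  have "\<one>\<^bsub>R1\<^esub> \<otimes>\<^bsub>R1\<^esub> kk \<one> = kk \<one>" using R1c.l_one[OF kk_c[OF one_closed]] .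
  then have "\<one>\<^bsub>R1\<^esub> \<notin> p1" using p1_iff[of "\<one>\<^bsub>R1\<^esub>" "\<one>" "\<one>"] one_notP R1c.one_closed by auto
  then show "\<one>\<^bsub>R1\<^esub> \<in> carrier R1 - p1" using R1c.one_closed by simp
  fix Z Z' assume Z: "Z \<in> carrier R1 - p1" and Z': "Z' \<in> carrier R1 - p1"
  obtain x s where xs: "x \<in> carrier R" "s \<in> carrier R - P" "Z \<otimes>\<^bsub>R1\<^esub> kk s = kk x" using R1_rep Z by blast
  obtain x' s' where xs': "x' \<in> carrier R" "s' \<in> carrier R - P" "Z' \<otimes>\<^bsub>R1\<^esub> kk s' = kk x'" using R1_rep Z' by blast
  have x: "x \<notin> P" "x' \<notin> P" using p1_iff xs xs' Z Z' by auto
  have c: "Z \<in> carrier R1" "Z' \<in> carrier R1" "kk s \<in> carrier R1" "kk s' \<in> carrier R1" using Z Z' kk_c xs xs' by auto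
  have "(Z \<otimes>\<^bsub>R1\<^esub> Z') \<otimes>\<^bsub>R1\<^esub> (kk s \<otimes>\<^bsub>R1\<^esub> kk s') = (Z \<otimes>\<^bsub>R1\<^esub> kk s) \<otimes>\<^bsub>R1\<^esub> (Z' \<otimes>\<^bsub>R1\<^esub> kk s')"
    using c by algebra
  also have "\<dots> = kk x \<otimes>\<^bsub>R1\<^esub> kk x'" by (simp only: xs(3) xs'(3))
  finally have "(Z \<otimes>\<^bsub>R1\<^esub> Z') \<otimes>\<^bsub>R1\<^esub> kk (s \<otimes> s') = kk (x \<otimes> x')" using xs xs' kk_mult by simp
  moreover have "s \<otimes> s' \<in> carrier R - P" using notP_mS xs xs' by auto
  moreover have "x \<otimes> x' \<notin> P" using P_mult xs xs' x by auto
  moreover have "Z \<otimes>\<^bsub>R1\<^esub> Z' \<in> carrier R1" by (rule R1c.m_closed[OF c(1,2)])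
  moreover have "x \<otimes> x' \<in> carrier R" using xs xs' by simp
  ultimately have "Z \<otimes>\<^bsub>R1\<^esub> Z' \<notin> p1" using p1_iff[of "Z \<otimes>\<^bsub>R1\<^esub> Z'" "s \<otimes> s'" "x \<otimes> x'"] by blast
  then show "Z \<otimes>\<^bsub>R1\<^esub> Z' \<in> carrier R1 - p1" using R1c.m_closed[OF c(1,2)] by blast
qed

abbreviation "gg Z \<equiv> frac R1 (carrier R1 - p1) Z \<one>\<^bsub>R1\<^esub>"
abbreviation "B \<equiv> loc R1 (carrier R1 - p1)"

lemma main2_is_loc: "is_loc R (carrier R - P) B (gg \<circ> kk)"
proof -
  interpret Bc: cring B by (rule l1.loc_cring)
  have gl: "is_loc R1 (carrier R1 - p1) B gg" by (rule l1.is_loc_loc)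
  have hl: "is_loc R' S' R1 hh" by (rule l'.is_loc_loc)
  have bl: "is_loc R (powers R b) Rb ib" using lb.is_loc_loc by (simp add: loc_at_def)
  have g_hom: "gg \<in> ring_hom R1 B" using gl unfolding is_loc_def by blast
  have f_hom: "gg \<circ> kk \<in> ring_hom R B" by (rule ring_hom_trans[OF kk_hom g_hom])
  have fc: "x \<in> carrier R \<Longrightarrow> gg (kk x) \<in> carrier B" for x using ring_hom_closed[OF f_hom] by simp
  have fm: "x \<in> carrier R \<Longrightarrow> y \<in> carrier R \<Longrightarrow> gg (kk (x \<otimes> y)) = gg (kk x) \<otimes>\<^bsub>B\<^esub> gg (kk y)" for x y
    using ring_hom_mult[OF f_hom] by simp
  have gm: "Xr \<in> carrier R1 \<Longrightarrow> Yr \<in> carrier R1 \<Longrightarrow> gg (Xr \<otimes>\<^bsub>R1\<^esub> Yr) = gg Xr \<otimes>\<^bsub>B\<^esub> gg Yr" for Xr Yr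
    using ring_hom_mult[OF g_hom] by simp
  have gc: "Xr \<in> carrier R1 \<Longrightarrow> gg Xr \<in> carrier B" for Xr using ring_hom_closed[OF g_hom] by simp
  show ?thesis unfolding is_loc_def
  proof (intro conjI ballI impI)
    show "gg \<circ> kk \<in> ring_hom R B" by (rule f_hom)
  next
    fix s assume s: "s \<in> carrier R - P"
    have "kk s \<otimes>\<^bsub>R1\<^esub> kk \<one> = kk s" using R1c.r_one kk_c s ring_hom_one[OF kk_hom] by simp
    then have "kk s \<notin> p1" using p1_iff[of "kk s" "\<one>" s] s kk_c one_notP by simp
    then have "kk s \<in> carrier R1 - p1" using s kk_c by auto
    then show "(gg \<circ> kk) s \<in> Units B" using l1.iota_unit by simp
  next
    fix y assume y: "y \<in> carrier B"
    obtain Xr Yr where XYr: "Xr \<in> carrier R1" "Yr \<in> carrier R1 - p1" "y \<otimes>\<^bsub>B\<^esub> gg Yr = gg Xr"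
      using gl y unfolding is_loc_def by blast
    obtain x1 s1 where 1: "x1 \<in> carrier R" "s1 \<in> carrier R - P" "Xr \<otimes>\<^bsub>R1\<^esub> kk s1 = kk x1" using R1_rep XYr by blast
    obtain x2 s2 where 2: "x2 \<in> carrier R" "s2 \<in> carrier R - P" "Yr \<otimes>\<^bsub>R1\<^esub> kk s2 = kk x2" using R1_rep[of Yr] XYr by blast
    have x2: "x2 \<notin> P" using p1_iff 2 XYr by auto
    have E2: "gg Xr \<otimes>\<^bsub>B\<^esub> gg (kk s1) = gg (kk x1)" using gm[of Xr "kk s1"] 1 XYr kk_c by simp
    have E3: "gg Yr \<otimes>\<^bsub>B\<^esub> gg (kk s2) = gg (kk x2)" using gm[of Yr "kk s2"] 2 XYr kk_c by simp
    have "y \<otimes>\<^bsub>B\<^esub> (gg (kk x2) \<otimes>\<^bsub>B\<^esub> gg (kk s1)) = gg (kk x1) \<otimes>\<^bsub>B\<^esub> gg (kk s2)"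
      by (rule Bc.comb3[OF y gc gc fc fc XYr(3) E2 E3]) (use XYr 1 2 kk_c in auto)
    then have "y \<otimes>\<^bsub>B\<^esub> (gg \<circ> kk) (x2 \<otimes> s1) = (gg \<circ> kk) (x1 \<otimes> s2)" using fm 1 2 by simp
    moreover have "x2 \<otimes> s1 \<in> carrier R - P" using notP_mS 1 2 x2 by auto
    moreover have "x1 \<otimes> s2 \<in> carrier R" using 1 2 by auto
    ultimately show "\<exists>x\<in>carrier R. \<exists>s\<in>carrier R - P. y \<otimes>\<^bsub>B\<^esub> (gg \<circ> kk) s = (gg \<circ> kk) x" by blast
  next
    fix x assume x: "x \<in> carrier R" and fx: "(gg \<circ> kk) x = \<zero>\<^bsub>B\<^esub>"
    obtain Yr where Yr: "Yr \<in> carrier R1 - p1" "Yr \<otimes>\<^bsub>R1\<^esub> kk x = \<zero>\<^bsub>R1\<^esub>"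
      using gl fx kk_c[OF x] unfolding is_loc_def by auto
    obtain x2 s2 where 2: "x2 \<in> carrier R" "s2 \<in> carrier R - P" "Yr \<otimes>\<^bsub>R1\<^esub> kk s2 = kk x2" using R1_rep[of Yr] Yr by blast
    have x2: "x2 \<notin> P" using p1_iff 2 Yr by auto
    have "kk x2 \<otimes>\<^bsub>R1\<^esub> kk x = \<zero>\<^bsub>R1\<^esub>"
      by (rule R1c.comb0[OF _ kk_c kk_c Yr(2) 2(3)]) (use Yr x 2 in auto)
    then have "hh (ib (x2 \<otimes> x)) = \<zero>\<^bsub>R1\<^esub>" using kk_mult 2 x by simp
    then obtain V where V: "V \<in> S'" "V \<otimes>\<^bsub>R'\<^esub> ib (x2 \<otimes> x) = \<zero>\<^bsub>R'\<^esub>"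
      using hl iota_in_G[of "x2 \<otimes> x"] 2 x unfolding is_loc_def by auto
    obtain d \<beta> where d: "d \<in> carrier R - P" "\<beta> \<in> powers R b" "V \<otimes>\<^bsub>Rb\<^esub> ib \<beta> = ib d" using S'_rep[OF V(1)] by blast
    have Vc: "V \<in> carrier Rb" using V G_sub by auto
    have bc: "\<beta> \<in> carrier R" using d powers_sub by auto
    have "ib d \<otimes>\<^bsub>Rb\<^esub> ib (x2 \<otimes> x) = \<zero>\<^bsub>Rb\<^esub>"
      by (rule Rbc.comb0[OF Vc _ _ _ d(3)]) (use V x 2 bc ring_hom_closed[OF ib_hom] in auto)
    then have "ib (d \<otimes> (x2 \<otimes> x)) = \<zero>\<^bsub>Rb\<^esub>" using ring_hom_mult[OF ib_hom, of d "x2 \<otimes> x"] d x 2 by simp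
    then obtain \<beta>' where \<beta>': "\<beta>' \<in> powers R b" "\<beta>' \<otimes> (d \<otimes> (x2 \<otimes> x)) = \<zero>"
      using bl d x 2 unfolding is_loc_def by (metis Diff_iff m_closed)
    have c: "\<beta>' \<in> carrier R - P" using powers_notP \<beta>' by auto
    have "(\<beta>' \<otimes> d \<otimes> x2) \<otimes> x = \<zero>" using \<beta>' c d x 2 by (simp add: m_assoc)
    moreover have "\<beta>' \<otimes> d \<otimes> x2 \<in> carrier R - P" using notP_mS c d 2 x2 by auto
    ultimately show "\<exists>s\<in>carrier R - P. s \<otimes> x = \<zero>" by blast
  qed
qed

end



sublocale dsetup \<subseteq> PI: ideal "center1 R \<nu> \<Delta>" R by (rule P_ideal)

context dsetup begin

abbreviation "Rq \<equiv> R Quot P"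
abbreviation "nq \<equiv> nu2 R \<nu> P"

lemma Rq_cring: "cring Rq" by (rule PI.quotient_is_cring[OF is_cring])
lemma pi_hom: "(\<lambda>x. P +> x) \<in> ring_hom R Rq" by (rule PI.rcos_ring_hom)
lemma Rq_carrier: "carrier Rq = (\<lambda>x. P +> x) ` carrier R"
  unfolding FactRing_def A_RCOSETS_def' by auto
lemma Rq_zero: "\<zero>\<^bsub>Rq\<^esub> = P" unfolding FactRing_def by simp

lemma pi_zero_iff: "x \<in> carrier R \<Longrightarrow> P +> x = P \<longleftrightarrow> x \<in> P"
  using PI.a_rcos_self PI.a_rcos_const by metis

lemma pi_sub_iff: "x \<in> carrier R \<Longrightarrow> P +> x \<subseteq> P \<longleftrightarrow> x \<in> P"
  using PI.a_rcos_self PI.a_rcos_const by blast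

lemma dom_val: assumes "p \<in> P" "x \<in> carrier R" "x \<notin> P" shows "\<nu> (p \<oplus> x) = \<nu> x"
proof -
  have pc: "p \<in> carrier R" using assms P_iff by auto
  obtain g where g: "\<nu> x = Some g" "g \<in> \<Delta>" using notP_fin assms by blast
  have lt: "vlt (\<nu> x) (\<nu> p)" using assms(1) g P_iff by auto
  then have "\<not> vle (\<nu> p) (\<nu> x)" using vle_antisym unfolding vlt_def by blast
  then have "vmin (\<nu> p) (\<nu> x) = \<nu> x" unfolding vmin_def by simp
  then have 1: "vle (\<nu> x) (\<nu> (p \<oplus> x))" using w_add[OF pc assms(2)] by simp
  have "x = (p \<oplus> x) \<oplus> \<ominus> p" using pc assms(2) by algebra
  then have 2: "vle (vmin (\<nu> (p \<oplus> x)) (\<nu> p)) (\<nu> x)" using w_add[of "p \<oplus> x" "\<ominus> p"] w_neg[OF pc] pc assms(2) by simp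
  show ?thesis
  proof (cases "vle (\<nu> (p \<oplus> x)) (\<nu> p)")
    case True
    then have "vle (\<nu> (p \<oplus> x)) (\<nu> x)" using 2 unfolding vmin_def by simp
    then show ?thesis using 1 vle_antisym by blast
  next
    case False
    then have "vle (\<nu> p) (\<nu> x)" using 2 unfolding vmin_def by simp
    then show ?thesis using lt vle_antisym unfolding vlt_def by blast
  qed
qed

lemma nq_pi: assumes "x \<in> carrier R" shows "nq (P +> x) = (if x \<in> P then None else \<nu> x)"
proof (cases "x \<in> P")
  case True then show ?thesis using pi_sub_iff assms unfolding nu2_def by simp
next
  case False
  have "(SOME a. a \<in> P +> x) \<in> P +> x" using PI.a_rcos_self[OF assms] by (rule someI)
  then obtain p where p: "p \<in> P" "(SOME a. a \<in> P +> x) = p \<oplus> x" unfolding a_r_coset_def' by auto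
  then show ?thesis using False pi_sub_iff assms dom_val unfolding nu2_def by simp
qed

lemma pi_mult: "x \<in> carrier R \<Longrightarrow> y \<in> carrier R \<Longrightarrow> (P +> x) \<otimes>\<^bsub>Rq\<^esub> (P +> y) = P +> (x \<otimes> y)"
  using ring_hom_mult[OF pi_hom] by simp
lemma pi_add: "x \<in> carrier R \<Longrightarrow> y \<in> carrier R \<Longrightarrow> (P +> x) \<oplus>\<^bsub>Rq\<^esub> (P +> y) = P +> (x \<oplus> y)"
  using ring_hom_add[OF pi_hom] by simp
lemma pi_one: "\<one>\<^bsub>Rq\<^esub> = P +> \<one>" using ring_hom_one[OF pi_hom] by simp

lemma Rq_cases: "U \<in> carrier Rq \<Longrightarrow> (\<And>x. x \<in> carrier R \<Longrightarrow> U = P +> x \<Longrightarrow> Q) \<Longrightarrow> Q"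
  using Rq_carrier by auto

lemma nq_pv: "pv Rq nq"
proof -
  interpret Q: cring Rq by (rule Rq_cring)
  show ?thesis
  proof (unfold_locales, unfold preval_def, intro conjI ballI)
    fix U V assume U: "U \<in> carrier Rq" and V: "V \<in> carrier Rq"
    obtain x y where xy: "x \<in> carrier R" "y \<in> carrier R" "U = P +> x" "V = P +> y" using U V Rq_cases by metis
    show "nq (U \<otimes>\<^bsub>Rq\<^esub> V) = vadd (nq U) (nq V)"
      using xy P_mult[of x y] by (simp add: pi_mult nq_pi w_mult)
    have "vle (vmin (\<nu> x) (\<nu> y)) (\<nu> (x \<oplus> y))" using w_add xy by auto
    moreover have "x \<in> P \<Longrightarrow> y \<in> P \<Longrightarrow> x \<oplus> y \<in> P" using P_add by blast
    moreover have "x \<in> P \<Longrightarrow> y \<notin> P \<Longrightarrow> \<nu> (x \<oplus> y) = \<nu> y"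
      using dom_val xy by auto
    moreover have "x \<notin> P \<Longrightarrow> y \<in> P \<Longrightarrow> \<nu> (x \<oplus> y) = \<nu> x"
      using dom_val[of y x] xy by (simp add: a_comm)
    ultimately show "vle (vmin (nq U) (nq V)) (nq (U \<oplus>\<^bsub>Rq\<^esub> V))"
      using xy by (auto simp: pi_add nq_pi)
  next
    show "nq \<one>\<^bsub>Rq\<^esub> = Some 0" using one_notP by (simp add: pi_one nq_pi)
    show "nq \<zero>\<^bsub>Rq\<^esub> = None" using Rq_zero unfolding nu2_def by simp
  qed
qed

lemma nq_cent: "has_center Rq nq"
  unfolding has_center_def
proof
  fix U assume "U \<in> carrier Rq"
  then obtain x where "x \<in> carrier R" "U = P +> x" using Rq_cases by metis
  then show "vle (Some 0) (nq U)" using centD' by (simp add: nq_pi)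
qed

end

lemma (in locz) frac_div: "a \<in> carrier R \<Longrightarrow> s \<in> S \<Longrightarrow> frac R S a s = frac R S a \<one> \<otimes>\<^bsub>L\<^esub> inv\<^bsub>L\<^esub> (frac R S s \<one>)"
proof -
  assume h: "a \<in> carrier R" "s \<in> S"
  interpret Lc: cring L by (rule loc_cring)
  show ?thesis using Lc.div_char[OF iota_unit[OF h(2)]] frac_times_iota[OF h] h S_carr by simp
qed

locale qsetup = msetup R \<nu> \<Delta> b as for R (structure) and \<nu> \<Delta> b as + fixes bb ab
  assumes bb_def: "center1 R \<nu> \<Delta> +>\<^bsub>R\<^esub> b = bb"
    and ab_def: "ab = map (\<lambda>a. center1 R \<nu> \<Delta> +>\<^bsub>R\<^esub> a) as"
    and bdat: "blowup_data (R Quot center1 R \<nu> \<Delta>) (nu2 R \<nu> (center1 R \<nu> \<Delta>)) bb ab"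
begin

sublocale Q: bsetup Rq nq bb ab
proof -
  show "bsetup Rq nq bb ab"
    using bdat nq_cent unfolding bsetup_def bsetup_axioms_def blowup_data_def vsupp_def
    using nq_pv by auto
qed

abbreviation "pq x \<equiv> P +> x"
abbreviation "f0 x \<equiv> Q.ib (pq x)"

lemma f0_hom: "f0 \<in> ring_hom R Q.Rb"
  using ring_hom_trans[OF pi_hom Q.ib_hom] by (simp add: comp_def)

lemma pq_pow: "x \<in> carrier R \<Longrightarrow> pq (x [^] (n::nat)) = (pq x) [^]\<^bsub>Rq\<^esub> n"
  using ring_hom_ring.hom_nat_pow[OF ring_hom_ringI2[OF ring_axioms Q.ring_axioms pi_hom]] by simp

lemma pq_powers: "\<beta> \<in> powers R b \<Longrightarrow> pq \<beta> \<in> powers Rq bb"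
  unfolding powers_def using pq_pow b_c bb_def by auto

lemma powers_q: "\<gamma> \<in> powers Rq bb \<Longrightarrow> \<exists>\<beta>\<in>powers R b. \<gamma> = pq \<beta>"
  unfolding powers_def using pq_pow b_c bb_def by auto

lemma f0_units: "\<beta> \<in> powers R b \<Longrightarrow> f0 \<beta> \<in> Units Q.Rb"
  using Q.lb.iota_unit[OF pq_powers] by (simp add: loc_at_def)

sublocale U1: locz_univ R "powers R b" Q.Rb f0
  unfolding locz_univ_def locz_univ_axioms_def
  using lb.locz_axioms Q.Rbc.cring_axioms f0_hom f0_units by blast

abbreviation "psi \<equiv> U1.F"

lemma psi_hom: "psi \<in> ring_hom Rb Q.Rb" using U1.F_hom by (simp add: loc_at_def)
lemma psi_ib: "x \<in> carrier R \<Longrightarrow> psi (ib x) = f0 x" by (rule U1.F_iota)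
lemma psi_c: "V \<in> carrier Rb \<Longrightarrow> psi V \<in> carrier Q.Rb" using ring_hom_closed[OF psi_hom] .

lemma psi_gen: "a \<in> carrier R \<Longrightarrow> psi (frac R (powers R b) a b) = frac Rq (powers Rq bb) (pq a) bb"
proof -
  assume a: "a \<in> carrier R"
  have "psi (frac R (powers R b) a b) = f0 a \<otimes>\<^bsub>Q.Rb\<^esub> inv\<^bsub>Q.Rb\<^esub> f0 b" using U1.F_frac a b_powers by simp
  also have "\<dots> = frac Rq (powers Rq bb) (pq a) bb"
    using Q.lb.frac_div[of "pq a" bb] a Q.b_powers bb_def ring_hom_closed[OF pi_hom] by (simp add: loc_at_def)
  finally show ?thesis .
qed

sublocale Hpsi: ring_hom_cring Rb Q.Rb psi by unfold_locales (rule psi_hom)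

lemma psi_G: "V \<in> G \<Longrightarrow> psi V \<in> Q.G"
proof (induct rule: generate_ring.induct)
  case one then show ?case using generate_ring.one by simp
next
  case (incl h)
  then show ?case
  proof (unfold gens_def, elim UnE imageE)
    fix x assume "x \<in> carrier R" "h = ib x"
    then show ?thesis using psi_ib Q.iota_in_G ring_hom_closed[OF pi_hom] by simp
  next
    fix a assume a: "a \<in> set as" "h = frac R (powers R b) a b"
    then have "psi h = frac Rq (powers Rq bb) (pq a) bb" using psi_gen as_c by auto
    moreover have "pq a \<in> set ab" using a ab_def by simp
    ultimately show ?thesis using Q.ab_in_G by simp
  qed
next
  case (a_inv h)
  then show ?case using G_sub generate_ring.a_inv by (simp add: subset_iff)
next
  case (eng_add h1 h2)
  then show ?case using G_sub generate_ring.eng_add by (simp add: subset_iff)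
next
  case (eng_mult h1 h2)
  then show ?case using G_sub generate_ring.eng_mult by (simp add: subset_iff)
qed

lemma G_psi: "W \<in> Q.G \<Longrightarrow> \<exists>V\<in>G. W = psi V"
proof (induct rule: generate_ring.induct)
  case one then show ?case using generate_ring.one by force
next
  case (incl h)
  then show ?case
  proof (unfold Q.gens_def, elim UnE imageE)
    fix y assume "y \<in> carrier Rq" "h = Q.ib y"
    then obtain x where "x \<in> carrier R" "y = pq x" using Rq_cases by metis
    then show ?thesis using psi_ib iota_in_G \<open>h = Q.ib y\<close> by blast
  next
    fix a' assume a: "a' \<in> set ab" "h = frac Rq (powers Rq bb) a' bb"
    then obtain a where "a \<in> set as" "a' = pq a" using ab_def by auto
    then show ?thesis using psi_gen as_c ab_in_G a by blast
  qed
next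
  case (a_inv h)
  then obtain V where "V \<in> G" "h = psi V" by blast
  then show ?case using G_sub generate_ring.a_inv by (auto simp: subset_iff intro!: bexI[of _ "\<ominus>\<^bsub>Rb\<^esub> V"])
next
  case (eng_add h1 h2)
  then obtain V1 V2 where "V1 \<in> G" "h1 = psi V1" "V2 \<in> G" "h2 = psi V2" by blast
  then show ?case using G_sub generate_ring.eng_add by (auto simp: subset_iff intro!: bexI[of _ "V1 \<oplus>\<^bsub>Rb\<^esub> V2"])
next
  case (eng_mult h1 h2)
  then obtain V1 V2 where "V1 \<in> G" "h1 = psi V1" "V2 \<in> G" "h2 = psi V2" by blast
  then show ?case using G_sub generate_ring.eng_mult by (auto simp: subset_iff intro!: bexI[of _ "V1 \<otimes>\<^bsub>Rb\<^esub> V2"])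
qed


lemma psi_hom': "psi \<in> ring_hom R' Q.R'"
  unfolding R'_def' Q.R'_def'
  by (rule ring_hom_restrict_cod[OF ring_hom_restrict_dom[OF psi_hom G_sub]]) (use psi_G in auto)

lemma vadd_Some0: "vadd x (Some g) = Some g \<Longrightarrow> x = Some 0" by (cases x) auto

lemma psi_rel: assumes "V \<in> carrier Rb" "c \<in> carrier R" "\<beta> \<in> powers R b" "V \<otimes>\<^bsub>Rb\<^esub> ib \<beta> = ib c"
  shows "psi V \<otimes>\<^bsub>Q.Rb\<^esub> f0 \<beta> = f0 c"
proof -
  have bc: "\<beta> \<in> carrier R" using assms powers_sub by auto
  have "psi (V \<otimes>\<^bsub>Rb\<^esub> ib \<beta>) = psi V \<otimes>\<^bsub>Q.Rb\<^esub> psi (ib \<beta>)"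
    using Hpsi.hom_mult assms(1) ring_hom_closed[OF ib_hom bc] by blast
  then show ?thesis using assms psi_ib bc by simp
qed

lemma psi_val: assumes "V \<in> carrier Rb" "c \<in> carrier R" "\<beta> \<in> powers R b" "V \<otimes>\<^bsub>Rb\<^esub> ib \<beta> = ib c"
  shows "vadd (ext_val nq (psi V)) (nq (pq \<beta>)) = nq (pq c)"
  using Q.Rb_val[OF psi_c[OF assms(1)] _ pq_powers[OF assms(3)] psi_rel[OF assms]]
    ring_hom_closed[OF pi_hom] assms(2) by simp

lemma psi_S': assumes "V \<in> S'" shows "psi V \<in> Q.S'"
proof -
  have V: "V \<in> G" "V \<in> carrier Rb" using assms G_sub by auto
  obtain d \<beta> where d: "d \<in> carrier R" "\<beta> \<in> powers R b" "V \<otimes>\<^bsub>Rb\<^esub> ib \<beta> = ib d" "\<nu> d = \<nu> \<beta>"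
    using S'_rep0[OF assms] by blast
  have b: "\<beta> \<in> carrier R - P" using powers_notP d by auto
  then have dP: "d \<notin> P" using same_val_P[of d \<beta>] d by auto
  obtain g where g: "\<nu> \<beta> = Some g" using notP_fin b by blast
  have nb: "nq (pq \<beta>) = Some g" using nq_pi b g by simp
  have nd: "nq (pq d) = Some g" using nq_pi[OF d(1)] dP d(4) g by simp
  have "vadd (ext_val nq (psi V)) (Some g) = Some g"
    using psi_val[OF V(2) d(1-3)] nb nd by simp
  then have "ext_val nq (psi V) = Some 0" by (rule vadd_Some0)
  then show ?thesis using Q.S'_iff psi_G V by blast
qed

lemma S'_back: assumes "V \<in> G" "psi V \<in> Q.S'" shows "V \<in> S'"
proof -
  have V: "V \<in> carrier Rb" using assms G_sub by auto
  obtain c \<beta> where c: "c \<in> carrier R" "\<beta> \<in> powers R b" "V \<otimes>\<^bsub>Rb\<^esub> ib \<beta> = ib c" using Rb_rep[OF V] by blast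
  have b: "\<beta> \<in> carrier R - P" using powers_notP c by auto
  obtain g where g: "\<nu> \<beta> = Some g" using notP_fin b by blast
  have e0: "ext_val nq (psi V) = Some 0" using assms(2) Q.S'_iff by blast
  have nb: "nq (pq \<beta>) = Some g" using nq_pi b g by simp
  have "vadd (ext_val nq (psi V)) (nq (pq \<beta>)) = nq (pq c)" by (rule psi_val[OF V c])
  then have "nq (pq c) = Some g" using e0 nb by simp
  then have cP: "c \<notin> P" "\<nu> c = Some g" using c nq_pi[OF c(1)] by (auto split: if_splits)
  have "vadd (ext_val \<nu> V) (Some g) = Some g" using Rb_val[OF V c] g cP by simp
  then have "ext_val \<nu> V = Some 0" by (rule vadd_Some0)
  then show ?thesis using S'_iff assms(1) by blast
qed

abbreviation "jj V \<equiv> Q.hh (psi V)"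

lemma jj_hom: "jj \<in> ring_hom R' Q.R1"
  using ring_hom_trans[OF psi_hom' Q.hh_hom] by (simp add: comp_def)

lemma jj_units: "V \<in> S' \<Longrightarrow> jj V \<in> Units Q.R1" using Q.l'.iota_unit[OF psi_S'] .

sublocale U2: locz_univ R' S' Q.R1 jj
  unfolding locz_univ_def locz_univ_axioms_def
  using l'.locz_axioms Q.R1c.cring_axioms jj_hom jj_units by blast

abbreviation "Phi \<equiv> U2.F"

lemma Phi_surj: "Phi ` carrier R1 = carrier Q.R1"
proof
  show "Phi ` carrier R1 \<subseteq> carrier Q.R1" using ring_hom_closed[OF U2.F_hom] by auto
  show "carrier Q.R1 \<subseteq> Phi ` carrier R1"
  proof
    fix z assume z: "z \<in> carrier Q.R1"
    obtain W1 W2 where W: "W1 \<in> carrier Q.R'" "W2 \<in> Q.S'" "z \<otimes>\<^bsub>Q.R1\<^esub> Q.hh W2 = Q.hh W1"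
      using Q.l'.is_loc_loc z unfolding is_loc_def by blast
    obtain V1 where V1: "V1 \<in> G" "W1 = psi V1" using G_psi W by auto
    obtain V2 where V2: "V2 \<in> G" "W2 = psi V2" using G_psi W by auto
    have V2S: "V2 \<in> S'" using S'_back V2 W by simp
    have jc: "jj V1 \<in> carrier Q.R1" using ring_hom_closed[OF jj_hom] V1 by simp
    have "z = jj V1 \<otimes>\<^bsub>Q.R1\<^esub> inv\<^bsub>Q.R1\<^esub> jj V2"
      using Q.R1c.div_char[OF jj_units[OF V2S] jc z] W V1 V2 by simp
    also have "\<dots> = Phi (frac R' S' V1 V2)" using U2.F_frac V1 V2S by simp
    finally show "z \<in> Phi ` carrier R1" using V1 V2S l'.frac_carrier by auto
  qed
qed

lemma Phi_ker: assumes "Z \<in> carrier R1" shows "Phi Z = \<zero>\<^bsub>Q.R1\<^esub> \<longleftrightarrow> Z \<in> p1"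
proof -
  obtain V1 V2 where V: "V1 \<in> carrier R'" "V2 \<in> S'" "Z = frac R' S' V1 V2" using l'.loc_carrierE assms by blast
  have V1: "V1 \<in> G" "V1 \<in> carrier Rb" using V G_sub by auto
  have V2: "V2 \<in> G" "ext_val \<nu> V2 = Some 0" using V S'_iff by auto
  obtain c \<beta>1 where c: "c \<in> carrier R" "\<beta>1 \<in> powers R b" "V1 \<otimes>\<^bsub>Rb\<^esub> ib \<beta>1 = ib c" using Rb_rep[OF V1(2)] by blast
  have b1: "\<beta>1 \<in> carrier R - P" using powers_notP c by auto
  have "Z \<otimes>\<^bsub>R1\<^esub> hh V2 = hh V1" using l'.frac_times_iota V by simp
  then have "blowup_val \<nu> (Z \<otimes>\<^bsub>R1\<^esub> hh V2) = blowup_val \<nu> (hh V1)" by simp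
  moreover have "blowup_val \<nu> (Z \<otimes>\<^bsub>R1\<^esub> hh V2) = vadd (blowup_val \<nu> Z) (blowup_val \<nu> (hh V2))"
    using R1p.w_mult assms hh_c[OF V2(1)] by blast
  ultimately have "vadd (blowup_val \<nu> Z) (Some 0) = ext_val \<nu> V1" using bv_hh V1 V2 by simp
  then have bz: "blowup_val \<nu> Z = ext_val \<nu> V1" by (cases "blowup_val \<nu> Z") auto
  have "vadd (blowup_val \<nu> Z) (\<nu> \<beta>1) = \<nu> c" using Rb_val[OF V1(2) c] bz by simp
  then have cl1: "Z \<in> p1 \<longleftrightarrow> c \<in> P" using transfer[of \<beta>1 c] b1 c assms unfolding center1_def by auto
  have jc: "jj V1 \<in> carrier Q.R1" using ring_hom_closed[OF jj_hom] V1 by simp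
  have u: "inv\<^bsub>Q.R1\<^esub> jj V2 \<in> Units Q.R1" using Q.R1c.Units_inv_Units[OF jj_units[OF V(2)]] .
  have PZ: "Phi Z = jj V1 \<otimes>\<^bsub>Q.R1\<^esub> inv\<^bsub>Q.R1\<^esub> jj V2" using U2.F_frac V by simp
  have ic: "inv\<^bsub>Q.R1\<^esub> jj V2 \<in> carrier Q.R1" using u by blast
  have cl2: "Phi Z = \<zero>\<^bsub>Q.R1\<^esub> \<longleftrightarrow> jj V1 = \<zero>\<^bsub>Q.R1\<^esub>"
  proof
    assume "Phi Z = \<zero>\<^bsub>Q.R1\<^esub>"
    then have "inv\<^bsub>Q.R1\<^esub> jj V2 \<otimes>\<^bsub>Q.R1\<^esub> jj V1 = \<zero>\<^bsub>Q.R1\<^esub>" using PZ Q.R1c.m_comm[OF jc ic] by simp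
    then show "jj V1 = \<zero>\<^bsub>Q.R1\<^esub>" by (rule Q.R1c.unit_cancel0[OF u jc])
  next
    assume "jj V1 = \<zero>\<^bsub>Q.R1\<^esub>"
    then show "Phi Z = \<zero>\<^bsub>Q.R1\<^esub>" using PZ Q.R1c.l_null[OF ic] by simp
  qed
  have rel: "psi V1 \<otimes>\<^bsub>Q.Rb\<^esub> f0 \<beta>1 = f0 c" by (rule psi_rel[OF V1(2) c])
  have f0u: "f0 \<beta>1 \<in> Units Q.Rb" by (rule f0_units[OF c(2)])
  have pV1: "psi V1 \<in> carrier Q.Rb" using psi_c V1 by simp
  have cl3: "jj V1 = \<zero>\<^bsub>Q.R1\<^esub> \<longleftrightarrow> c \<in> P"
  proof
    assume "c \<in> P"
    then have "pq c = \<zero>\<^bsub>Rq\<^esub>" using pi_zero_iff c Rq_zero by simp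
    then have "f0 c = \<zero>\<^bsub>Q.Rb\<^esub>" using ring_hom_zero[OF Q.ib_hom Q.ring_axioms Q.Rbc.ring_axioms] by simp
    then have "f0 \<beta>1 \<otimes>\<^bsub>Q.Rb\<^esub> psi V1 = \<zero>\<^bsub>Q.Rb\<^esub>" using rel pV1 f0u Q.Rbc.m_comm by auto
    then have "psi V1 = \<zero>\<^bsub>Q.Rb\<^esub>" using Q.Rbc.unit_cancel0[OF f0u pV1] by simp
    then show "jj V1 = \<zero>\<^bsub>Q.R1\<^esub>"
      using ring_hom_zero[OF Q.hh_hom Q.R'c.ring_axioms Q.R1c.ring_axioms] by simp
  next
    assume j0: "jj V1 = \<zero>\<^bsub>Q.R1\<^esub>"
    obtain W where W: "W \<in> Q.S'" "W \<otimes>\<^bsub>Q.R'\<^esub> psi V1 = \<zero>\<^bsub>Q.R'\<^esub>"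
      using Q.l'.is_loc_loc j0 psi_G[OF V1(1)] unfolding is_loc_def by auto
    obtain d \<gamma> where d: "d \<in> carrier Rq" "\<gamma> \<in> powers Rq bb" "W \<otimes>\<^bsub>Q.Rb\<^esub> Q.ib \<gamma> = Q.ib d" "nq d = nq \<gamma>"
      using Q.S'_rep0[OF W(1)] by blast
    obtain d' where d': "d' \<in> carrier R" "d = pq d'" using Rq_cases d by metis
    have "nq \<gamma> \<noteq> None" using Q.lb.S_fin d by blast
    then have d'P: "d' \<notin> P" using d d' by (auto simp: nq_pi)
    have Wc: "W \<in> carrier Q.Rb" using W Q.G_sub by auto
    have gc: "\<gamma> \<in> carrier Rq" using d Q.powers_sub by auto
    have "Q.ib d \<otimes>\<^bsub>Q.Rb\<^esub> psi V1 = \<zero>\<^bsub>Q.Rb\<^esub>"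
      by (rule Q.Rbc.comb0[OF Wc pV1 _ _ d(3)]) (use W gc ring_hom_closed[OF Q.ib_hom] in auto)
    moreover have "Q.ib d \<otimes>\<^bsub>Q.Rb\<^esub> f0 c = (Q.ib d \<otimes>\<^bsub>Q.Rb\<^esub> psi V1) \<otimes>\<^bsub>Q.Rb\<^esub> f0 \<beta>1"
    proof -
      have cc: "Q.ib d \<in> carrier Q.Rb" "f0 \<beta>1 \<in> carrier Q.Rb" using ring_hom_closed[OF Q.ib_hom d(1)] f0u by auto
      have "Q.ib d \<otimes>\<^bsub>Q.Rb\<^esub> f0 c = Q.ib d \<otimes>\<^bsub>Q.Rb\<^esub> (psi V1 \<otimes>\<^bsub>Q.Rb\<^esub> f0 \<beta>1)" by (simp only: rel)
      also have "\<dots> = (Q.ib d \<otimes>\<^bsub>Q.Rb\<^esub> psi V1) \<otimes>\<^bsub>Q.Rb\<^esub> f0 \<beta>1" using cc pV1 by (simp add: Q.Rbc.m_assoc)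
      finally show ?thesis .
    qed
    ultimately have "Q.ib d \<otimes>\<^bsub>Q.Rb\<^esub> f0 c = \<zero>\<^bsub>Q.Rb\<^esub>" using Q.Rbc.l_null[OF Q.Rbc.Units_closed[OF f0u]] by simp
    then have "Q.ib (d \<otimes>\<^bsub>Rq\<^esub> pq c) = \<zero>\<^bsub>Q.Rb\<^esub>"
      using ring_hom_mult[OF Q.ib_hom d(1), of "pq c"] ring_hom_closed[OF pi_hom c(1)] by simp
    then obtain \<gamma>' where g': "\<gamma>' \<in> powers Rq bb" "\<gamma>' \<otimes>\<^bsub>Rq\<^esub> (d \<otimes>\<^bsub>Rq\<^esub> pq c) = \<zero>\<^bsub>Rq\<^esub>"
      using Q.lb.iota_kernel[of "d \<otimes>\<^bsub>Rq\<^esub> pq c"] d(1) ring_hom_closed[OF pi_hom c(1)] Q.m_closed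
      by (auto simp: loc_at_def)
    obtain \<beta>' where b': "\<beta>' \<in> powers R b" "\<gamma>' = pq \<beta>'" using powers_q g' by blast
    have b'c: "\<beta>' \<in> carrier R - P" using powers_notP b' by auto
    have "pq (\<beta>' \<otimes> (d' \<otimes> c)) = \<zero>\<^bsub>Rq\<^esub>" using g' b' d' b'c c pi_mult by simp
    then have "\<beta>' \<otimes> (d' \<otimes> c) \<in> P" using pi_zero_iff Rq_zero b'c d' c by simp
    then show "c \<in> P" using P_mult b'c d' d'P c by auto
  qed
  show ?thesis using cl1 cl2 cl3 by simp
qed

lemma final1: "R1 Quot p1 \<simeq> Q.R1"
proof -
  interpret H: ring_hom_ring R1 Q.R1 Phi
    by (rule ring_hom_ringI2[OF R1c.ring_axioms Q.R1c.ring_axioms U2.F_hom])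
  have "a_kernel R1 Q.R1 Phi = p1"
    using Phi_ker unfolding a_kernel_def kernel_def center1_def by auto
  then show ?thesis using H.FactRing_iso[OF Phi_surj] by simp
qed

end

theorem mainTheorem6:
  fixes R :: "'a ring" and m :: "'a set"
    and \<nu> :: "'a \<Rightarrow> 'g::linordered_ab_group_add option"
    and \<Delta> :: "'g set"
    and bbar :: "'a set" and abar :: "'a set list"
  assumes "noeth_local_ring R m"
    and "valuation R \<nu>" and "centered_on R m \<nu>"
    and "convex_subgroup \<Delta> (value_group R \<nu>)"
    and "blowup_data (R Quot (center1 R \<nu> \<Delta>)) (nu2 R \<nu> (center1 R \<nu> \<Delta>)) bbar abar"
  shows "\<exists>b as. blowup_data R \<nu> b as \<and>
     (blowup R \<nu> b as) Quot (center1 (blowup R \<nu> b as) (blowup_val \<nu>) \<Delta>)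
        \<simeq> blowup (R Quot (center1 R \<nu> \<Delta>)) (nu2 R \<nu> (center1 R \<nu> \<Delta>)) bbar abar \<and>
     loc_prime R (center1 R \<nu> \<Delta>)
        \<simeq> loc_prime (blowup R \<nu> b as) (center1 (blowup R \<nu> b as) (blowup_val \<nu>) \<Delta>)"
proof -
  have cr: "cring R" using assms(1) unfolding noeth_local_ring_def by blast
  have pvR: "pv R \<nu>" unfolding pv_def pv_axioms_def preval_def
    using cr assms(2) unfolding valuation_def by blast
  have cent: "has_center R \<nu>" using assms(3) unfolding centered_on_def by blast
  interpret D: dsetup R \<nu> \<Delta>
    unfolding dsetup_def dsetup_axioms_def using pvR cent assms(4) by blast
  let ?P = "center1 R \<nu> \<Delta>"
  define lift where "lift y = (SOME x. x \<in> carrier R \<and> ?P +>\<^bsub>R\<^esub> x = y)" for y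
  have lift: "lift y \<in> carrier R" "?P +>\<^bsub>R\<^esub> lift y = y" if "y \<in> carrier (R Quot ?P)" for y
  proof -
    have "y \<in> (\<lambda>x. ?P +>\<^bsub>R\<^esub> x) ` carrier R" using D.Rq_carrier that by simp
    then obtain x where "x \<in> carrier R" "?P +>\<^bsub>R\<^esub> x = y" by blast
    then have "\<exists>x. x \<in> carrier R \<and> ?P +>\<^bsub>R\<^esub> x = y" by blast
    then have "lift y \<in> carrier R \<and> ?P +>\<^bsub>R\<^esub> lift y = y" unfolding lift_def by (rule someI_ex)
    then show "lift y \<in> carrier R" "?P +>\<^bsub>R\<^esub> lift y = y" by auto
  qed
  have bd: "bbar \<in> carrier (R Quot ?P)" "nu2 R \<nu> ?P bbar \<noteq> None" "set abar \<subseteq> carrier (R Quot ?P)"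
    "\<And>a. a \<in> set abar \<Longrightarrow> vle (nu2 R \<nu> ?P bbar) (nu2 R \<nu> ?P a)"
    using assms(5) unfolding blowup_data_def vsupp_def by auto
  define b where "b = lift bbar"
  define as where "as = map lift abar"
  have bc: "b \<in> carrier R" "?P +>\<^bsub>R\<^esub> b = bbar" using lift bd b_def by auto
  have asc: "set as \<subseteq> carrier R" using lift bd as_def by auto
  have ab: "abar = map (\<lambda>a. ?P +>\<^bsub>R\<^esub> a) as"
    unfolding as_def using lift bd(3) by (induct abar) auto
  have bP: "b \<notin> ?P" using bd(2) bc D.nq_pi[of b] by (auto split: if_splits)
  have nb: "nu2 R \<nu> ?P bbar = \<nu> b" using bc bP D.nq_pi[of b] by simp
  obtain g where g: "\<nu> b = Some g" "g \<in> \<Delta>" using D.notP_fin bc bP by blast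
  have asv: "vle (\<nu> b) (\<nu> a)" if "a \<in> set as" for a
  proof -
    have a: "a \<in> carrier R" using that asc by auto
    have "?P +>\<^bsub>R\<^esub> a \<in> set abar" using that ab by simp
    then have v: "vle (\<nu> b) (nu2 R \<nu> ?P (?P +>\<^bsub>R\<^esub> a))" using bd(4) nb by simp
    show ?thesis
    proof (cases "a \<in> ?P")
      case True
      then have "vlt (Some g) (\<nu> a)" using g D.P_iff by auto
      then show ?thesis using g unfolding vlt_def by simp
    next
      case False
      then show ?thesis using v D.nq_pi[OF a] by simp
    qed
  qed
  interpret M: msetup R \<nu> \<Delta> b as
    unfolding msetup_def msetup_axioms_def bsetup_def bsetup_axioms_def
    using D.dsetup_axioms pvR cent bc asc g bP asv by auto
  interpret QS: qsetup R \<nu> \<Delta> b as bbar abar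
    unfolding qsetup_def qsetup_axioms_def using M.msetup_axioms bc(2) ab assms(5) by blast
  have bdat: "blowup_data R \<nu> b as"
    unfolding blowup_data_def vsupp_def using bc asc asv g by auto
  have iso1: "(blowup R \<nu> b as) Quot (center1 (blowup R \<nu> b as) (blowup_val \<nu>) \<Delta>)
        \<simeq> blowup (R Quot ?P) (nu2 R \<nu> ?P) bbar abar"
    using QS.final1 M.R1_def' QS.Q.R1_def' by simp
  have iso2: "loc_prime R ?P \<simeq> loc_prime (blowup R \<nu> b as) (center1 (blowup R \<nu> b as) (blowup_val \<nu>) \<Delta>)"
    unfolding loc_prime_def M.R1_def' using D.lP.is_loc_iso[OF M.l1.loc_cring M.main2_is_loc] .
  show ?thesis using bdat iso1 iso2 by blast
qed


end
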